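(* Let $\boldsymbol k$ be an algebraically closed field with $\operatorname{char}\boldsymbol k\neq 2$, let $V$ be a vector space over $\boldsymbol k$ of finite dimension $n$, let $\mathcal M:=V^*\otimes V^*\otimes V$, and let $G:=\mathrm{GL}(V)$ act naturally on $\mathcal M$. Then there exist two finite sets $\{s_p\}_{p\in P}$ and $\{t_q\}_{q\in Q}$ of nonconstant polynomial functions on $\mathcal M$ such that: (i) the closed subset $\mathcal S:=\{m\in\mathcal M\mid s_p(m)=0\ \forall p\in P\}$ is irreducible, and the map $\boldsymbol k(\mathcal M)^G\to\boldsymbol k(\mathcal S)$, $f\mapsto f|_{\mathcal S}$, is well defined and is a $\boldsymbol k$-isomorphism of fields; (ii) for every point $a$ of the open dense subset $\{m\in\mathcal M\mid t_q(m)\neq 0\ \forall q\in Q\}$ of $\mathcal M$ there exists a unique element $g\in G$ with $g\cdot a\in\mathcal S$.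
   Context: $\boldsymbol k(\mathcal M)^G$ denotes the field of $G$-invariant rational functions on $\mathcal M$, and $\boldsymbol k(\mathcal S)$ the field of rational functions on the irreducible variety $\mathcal S$. Topology is the Zariski topology. *)

theory Defs
  imports Main "HOL-Computational_Algebra.Polynomial"
begin

definition alg_closed :: "'k::field itself \<Rightarrow> bool" where
  "alg_closed _ \<longleftrightarrow> (\<forall>p::'k poly. degree p > 0 \<longrightarrow> (\<exists>x. poly p x = 0))"

text \<open>V = k^n with basis indexed by the finite type 'n.  An element of
  M = V* \<otimes> V* \<otimes> V is given by its structure constants m i j c, i.e.
  the bilinear map with m(e_i,e_j) = \<Sum>c. m i j c e_c.\<close>
type_synonym ('k,'n) tensor = "'n \<Rightarrow> 'n \<Rightarrow> 'n \<Rightarrow> 'k"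
type_synonym ('k,'n) mat = "'n \<Rightarrow> 'n \<Rightarrow> 'k"

definition mat_mult :: "('k::comm_ring_1,'n::finite) mat \<Rightarrow> ('k,'n) mat \<Rightarrow> ('k,'n) mat" where
  "mat_mult A B = (\<lambda>i j. \<Sum>l\<in>UNIV. A i l * B l j)"

definition mat_one :: "('k::comm_ring_1,'n::finite) mat" where
  "mat_one = (\<lambda>i j. if i = j then 1 else 0)"

definition GL :: "('k::comm_ring_1,'n::finite) mat set" where
  "GL = {g. \<exists>h. mat_mult g h = mat_one \<and> mat_mult h g = mat_one}"

definition mat_inv :: "('k::comm_ring_1,'n::finite) mat \<Rightarrow> ('k,'n) mat" where
  "mat_inv g = (SOME h. mat_mult g h = mat_one \<and> mat_mult h g = mat_one)"

text \<open>Natural action: (g.m)(x,y) = g (m (g^-1 x, g^-1 y)), where g e_a = \<Sum>c. g c a e_c.\<close>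
definition act :: "('k::comm_ring_1,'n::finite) mat \<Rightarrow> ('k,'n) tensor \<Rightarrow> ('k,'n) tensor" where
  "act g m = (\<lambda>i j k. \<Sum>a\<in>UNIV. \<Sum>b\<in>UNIV. \<Sum>c\<in>UNIV.
       mat_inv g a i * mat_inv g b j * m a b c * g k c)"

inductive_set polyfun :: "(('k::comm_ring_1,'n) tensor \<Rightarrow> 'k) set" where
  const: "(\<lambda>_. c) \<in> polyfun"
| coord: "(\<lambda>m. m i j k) \<in> polyfun"
| add: "p \<in> polyfun \<Longrightarrow> q \<in> polyfun \<Longrightarrow> (\<lambda>m. p m + q m) \<in> polyfun"
| mult: "p \<in> polyfun \<Longrightarrow> q \<in> polyfun \<Longrightarrow> (\<lambda>m. p m * q m) \<in> polyfun"

definition nonconstant :: "('a \<Rightarrow> 'k) \<Rightarrow> bool" where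
  "nonconstant f \<longleftrightarrow> (\<exists>x y. f x \<noteq> f y)"

definition zariski_closed :: "('k::comm_ring_1,'n) tensor set \<Rightarrow> bool" where
  "zariski_closed Z \<longleftrightarrow> (\<exists>F \<subseteq> polyfun. Z = {m. \<forall>f\<in>F. f m = 0})"

definition zariski_open :: "('k::comm_ring_1,'n) tensor set \<Rightarrow> bool" where
  "zariski_open U \<longleftrightarrow> zariski_closed (- U)"

definition zariski_dense :: "('k::comm_ring_1,'n) tensor set \<Rightarrow> bool" where
  "zariski_dense U \<longleftrightarrow> (\<forall>W. zariski_open W \<and> W \<noteq> {} \<longrightarrow> W \<inter> U \<noteq> {})"

definition irreducible_set :: "('k::comm_ring_1,'n) tensor set \<Rightarrow> bool" where
  "irreducible_set S \<longleftrightarrow> S \<noteq> {} \<and>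
     (\<forall>Z1 Z2. zariski_closed Z1 \<and> zariski_closed Z2 \<and> S \<subseteq> Z1 \<union> Z2 \<longrightarrow> S \<subseteq> Z1 \<or> S \<subseteq> Z2)"

text \<open>Rational functions are represented by fractions (p,q) of polynomial functions.
  k(M): q not identically zero; two fractions are equal iff p q' = p' q on M.
  k(S) for irreducible closed S: q not identically zero on S; equality iff p q' = p' q on S.\<close>
definition ratM :: "((('k::comm_ring_1,'n) tensor \<Rightarrow> 'k) \<times> (('k,'n) tensor \<Rightarrow> 'k)) set" where
  "ratM = {(p,q). p \<in> polyfun \<and> q \<in> polyfun \<and> (\<exists>m. q m \<noteq> 0)}"

definition eqM :: "(('k::comm_ring_1,'n) tensor \<Rightarrow> 'k) \<times> (('k,'n) tensor \<Rightarrow> 'k)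
     \<Rightarrow> (('k,'n) tensor \<Rightarrow> 'k) \<times> (('k,'n) tensor \<Rightarrow> 'k) \<Rightarrow> bool" where
  "eqM f f' \<longleftrightarrow> (\<forall>m. fst f m * snd f' m = fst f' m * snd f m)"

definition ratM_inv :: "((('k::field,'n::finite) tensor \<Rightarrow> 'k) \<times> (('k,'n) tensor \<Rightarrow> 'k)) set" where
  "ratM_inv = {f \<in> ratM. \<forall>g\<in>GL. eqM (fst f \<circ> act g, snd f \<circ> act g) f}"

definition ratS :: "('k::comm_ring_1,'n) tensor set
     \<Rightarrow> ((('k,'n) tensor \<Rightarrow> 'k) \<times> (('k,'n) tensor \<Rightarrow> 'k)) set" where
  "ratS S = {(p,q). p \<in> polyfun \<and> q \<in> polyfun \<and> (\<exists>m\<in>S. q m \<noteq> 0)}"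

definition eqS :: "('k::comm_ring_1,'n) tensor set \<Rightarrow> (('k,'n) tensor \<Rightarrow> 'k) \<times> (('k,'n) tensor \<Rightarrow> 'k)
     \<Rightarrow> (('k,'n) tensor \<Rightarrow> 'k) \<times> (('k,'n) tensor \<Rightarrow> 'k) \<Rightarrow> bool" where
  "eqS S f f' \<longleftrightarrow> (\<forall>m\<in>S. fst f m * snd f' m = fst f' m * snd f m)"

text \<open>The restriction map k(M)^G \<rightarrow> k(S), f \<mapsto> f|_S, is well defined and bijective.
  On representatives it is the identity (a fraction whose denominator does not vanish
  identically on S is read as an element of k(S)); hence it is automatically compatible
  with the field operations and with k-scalars, so it is a k-isomorphism of fields iff:
  (1) every class in k(M)^G has a representative whose denominator does not vanish on S
      (well-definedness, independence of representative being automatic);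
  (2) it is injective; (3) it is surjective.\<close>
definition restriction_iso :: "('k::field,'n::finite) tensor set \<Rightarrow> bool" where
  "restriction_iso S \<longleftrightarrow>
     (\<forall>f\<in>ratM_inv. \<exists>f'\<in>ratS S. eqM f f') \<and>
     (\<forall>f1\<in>ratM_inv \<inter> ratS S. \<forall>f2\<in>ratM_inv \<inter> ratS S. eqS S f1 f2 \<longrightarrow> eqM f1 f2) \<and>
     (\<forall>h\<in>ratS S. \<exists>f\<in>ratM_inv \<inter> ratS S. eqS S f h)"

end

theory Submission
  imports Defs "HOL-Analysis.Analysis"
begin


lemma polyfun_minus: "p \<in> polyfun \<Longrightarrow> q \<in> polyfun \<Longrightarrow> (\<lambda>m. p m - q m) \<in> polyfun"
proof -
  assume "p \<in> polyfun" "q \<in> polyfun"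
  hence "(\<lambda>m. p m + (\<lambda>_. -1) m * q m) \<in> polyfun" by (intro polyfun.intros)
  thus ?thesis by simp
qed

lemma polyfun_sum:
  "finite A \<Longrightarrow> (\<And>a. a \<in> A \<Longrightarrow> (\<lambda>m. F a m) \<in> polyfun) \<Longrightarrow> (\<lambda>m. \<Sum>a\<in>A. F a m) \<in> polyfun"
proof (induction A rule: finite_induct)
  case empty then show ?case using polyfun.const[of 0] by simp
next
  case (insert x A) then show ?case by (simp add: polyfun.add)
qed

lemma polyfun_prod:
  "finite A \<Longrightarrow> (\<And>a. a \<in> A \<Longrightarrow> (\<lambda>m. F a m) \<in> polyfun) \<Longrightarrow> (\<lambda>m. \<Prod>a\<in>A. F a m) \<in> polyfun"
proof (induction A rule: finite_induct)
  case empty then show ?case using polyfun.const[of 1] by simp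
next
  case (insert x A) then show ?case by (simp add: polyfun.mult)
qed

lemma polyfun_comp:
  assumes "p \<in> polyfun" "\<And>i j c. (\<lambda>m. F m i j c) \<in> polyfun"
  shows "(\<lambda>m. p (F m)) \<in> polyfun"
  using assms(1)
proof induction
  case (const c) then show ?case by (rule polyfun.const)
next
  case (coord i j k) then show ?case using assms(2) by simp
next
  case (add p q) then show ?case using polyfun.add[of "\<lambda>m. p (F m)" "\<lambda>m. q (F m)"] by simp
next
  case (mult p q) then show ?case using polyfun.mult[of "\<lambda>m. p (F m)" "\<lambda>m. q (F m)"] by simp
qed

lemma polyfun_line:
  assumes "p \<in> polyfun"
  shows "\<exists>P. \<forall>t. poly P t = p (\<lambda>i j c. a i j c + t * b i j c)"
  using assms
proof induction
  case (const c) then show ?case by (intro exI[of _ "[:c:]"]) simp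
next
  case (coord i j k) then show ?case by (intro exI[of _ "[:a i j k, b i j k:]"]) (simp add: algebra_simps)
next
  case (add p q)
  then obtain P Q where "\<forall>t. poly P t = p (\<lambda>i j c. a i j c + t * b i j c)"
     "\<forall>t. poly Q t = q (\<lambda>i j c. a i j c + t * b i j c)" by blast
  then show ?case by (intro exI[of _ "P + Q"]) simp
next
  case (mult p q)
  then obtain P Q where "\<forall>t. poly P t = p (\<lambda>i j c. a i j c + t * b i j c)"
     "\<forall>t. poly Q t = q (\<lambda>i j c. a i j c + t * b i j c)" by blast
  then show ?case by (intro exI[of _ "P * Q"]) simp
qed

lemma alg_closed_infinite:
  assumes "alg_closed TYPE('k::field)"
  shows "infinite (UNIV :: 'k set)"
proof
  assume fin: "finite (UNIV :: 'k set)"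
  define P :: "'k poly" where "P = (\<Prod>a\<in>UNIV. [:-a, 1:]) + 1"
  have dprod: "degree (\<Prod>a\<in>(UNIV::'k set). [:-a, 1:]) = card (UNIV::'k set)"
    by (subst degree_prod_eq_sum_degree) auto
  have "card (UNIV :: 'k set) > 0" using fin by (simp add: card_gt_0_iff)
  hence "degree P > 0" unfolding P_def using dprod
    by (metis degree_add_eq_left degree_1 )
  then obtain x where "poly P x = 0" using assms unfolding alg_closed_def by blast
  moreover have "poly (\<Prod>a\<in>(UNIV::'k set). [:-a, 1:]) x = 0"
    using fin by (auto simp: poly_prod intro!: prod_zero bexI[of _ x])
  ultimately show False unfolding P_def by simp
qed

lemma poly_zero_infinite:
  fixes P :: "'k::field poly"
  assumes "infinite (UNIV :: 'k set)" "\<forall>t. poly P t = 0"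
  shows "P = 0"
proof (rule ccontr)
  assume "P \<noteq> 0"
  hence "finite {x. poly P x = 0}" by (rule poly_roots_finite)
  with assms show False by simp
qed

lemma polyfun_domain:
  fixes p q :: "('k::field,'n) tensor \<Rightarrow> 'k"
  assumes inf: "infinite (UNIV :: 'k set)"
    and pq: "p \<in> polyfun" "q \<in> polyfun" and z: "\<And>m. p m * q m = 0"
  shows "(\<forall>m. p m = 0) \<or> (\<forall>m. q m = 0)"
proof (rule ccontr)
  assume "\<not> ?thesis"
  then obtain a b where a: "p a \<noteq> 0" and b: "q b \<noteq> 0" by blast
  obtain P where P: "\<forall>t. poly P t = p (\<lambda>i j c. a i j c + t * (b i j c - a i j c))"
    using polyfun_line[OF pq(1), of a "\<lambda>i j c. b i j c - a i j c"] by blast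
  obtain Q where Q: "\<forall>t. poly Q t = q (\<lambda>i j c. a i j c + t * (b i j c - a i j c))"
    using polyfun_line[OF pq(2), of a "\<lambda>i j c. b i j c - a i j c"] by blast
  have "\<forall>t. poly (P*Q) t = 0" using P Q z by simp
  hence "P * Q = 0" using poly_zero_infinite[OF inf] by blast
  moreover have "poly P 0 \<noteq> 0" using P a by simp
  moreover have "(\<lambda>i j c. a i j c + 1 * (b i j c - a i j c)) = b" by simp
  hence "poly Q 1 \<noteq> 0" using Q b by simp
  ultimately show False by auto
qed




lemma delta_mult[simp]: "(if a = b then 1 else 0) * (x::'a::comm_ring_1) = (if a = b then x else 0)" by simp
lemma mult_delta[simp]: "(x::'a::comm_ring_1) * (if a = b then 1 else 0) = (if a = b then x else 0)" by simp

lemma mat_mult_assoc: "mat_mult (mat_mult A B) C = mat_mult A (mat_mult B C)"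
  unfolding mat_mult_def
  apply (rule ext, rule ext) apply (simp add: sum_distrib_left sum_distrib_right mult.assoc) by (rule sum.swap)

lemma mat_mult_one_left[simp]: "mat_mult mat_one A = A"
  unfolding mat_mult_def mat_one_def by (rule ext, rule ext) simp

lemma mat_mult_one_right[simp]: "mat_mult A mat_one = A"
  unfolding mat_mult_def mat_one_def by (rule ext, rule ext) simp

lemma GL_inv:
  assumes "g \<in> GL" shows "mat_mult g (mat_inv g) = mat_one" "mat_mult (mat_inv g) g = mat_one"
proof -
  from assms obtain h where "mat_mult g h = mat_one \<and> mat_mult h g = mat_one" unfolding GL_def by blast
  hence "mat_mult g (mat_inv g) = mat_one \<and> mat_mult (mat_inv g) g = mat_one"
    unfolding mat_inv_def by (rule someI[of "\<lambda>h. mat_mult g h = mat_one \<and> mat_mult h g = mat_one" h])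
  thus "mat_mult g (mat_inv g) = mat_one" "mat_mult (mat_inv g) g = mat_one" by auto
qed

lemma GL_one[simp]: "mat_one \<in> GL" unfolding GL_def by (intro CollectI exI[of _ mat_one]) simp

lemma GL_inv_GL: "g \<in> GL \<Longrightarrow> mat_inv g \<in> GL"
  unfolding GL_def using GL_inv[unfolded GL_def] by blast

lemma GL_mult: assumes "g \<in> GL" "h \<in> GL" shows "mat_mult g h \<in> GL"
proof -
  have "mat_mult (mat_mult g h) (mat_mult (mat_inv h) (mat_inv g)) = mat_mult g (mat_mult (mat_mult h (mat_inv h)) (mat_inv g))"
    by (simp only: mat_mult_assoc)
  hence 1: "mat_mult (mat_mult g h) (mat_mult (mat_inv h) (mat_inv g)) = mat_one"
    by (simp add: GL_inv assms)
  have "mat_mult (mat_mult (mat_inv h) (mat_inv g)) (mat_mult g h) = mat_mult (mat_inv h) (mat_mult (mat_mult (mat_inv g) g) h)"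
    by (simp only: mat_mult_assoc)
  hence 2: "mat_mult (mat_mult (mat_inv h) (mat_inv g)) (mat_mult g h) = mat_one"
    by (simp add: GL_inv assms)
  from 1 2 show ?thesis unfolding GL_def by blast
qed

lemma inv_unique_left: assumes "g \<in> GL" "mat_mult h g = mat_one" shows "h = mat_inv g"
proof -
  have "h = mat_mult h (mat_mult g (mat_inv g))" by (simp add: GL_inv assms)
  also have "\<dots> = mat_mult (mat_mult h g) (mat_inv g)" by (simp only: mat_mult_assoc)
  also have "\<dots> = mat_inv g" by (simp add: assms)
  finally show ?thesis .
qed

lemma inv_unique_right: assumes "g \<in> GL" "mat_mult g h = mat_one" shows "h = mat_inv g"
proof -
  have "h = mat_mult (mat_mult (mat_inv g) g) h" by (simp add: GL_inv assms)
  also have "\<dots> = mat_mult (mat_inv g) (mat_mult g h)" by (simp only: mat_mult_assoc)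
  also have "\<dots> = mat_inv g" by (simp add: assms)
  finally show ?thesis .
qed

lemma mat_inv_mult: assumes "g \<in> GL" "h \<in> GL"
  shows "mat_inv (mat_mult g h) = mat_mult (mat_inv h) (mat_inv g)"
proof -
  have "mat_mult (mat_mult (mat_inv h) (mat_inv g)) (mat_mult g h) = mat_mult (mat_inv h) (mat_mult (mat_mult (mat_inv g) g) h)"
    by (simp only: mat_mult_assoc)
  hence "mat_mult (mat_mult (mat_inv h) (mat_inv g)) (mat_mult g h) = mat_one"
    by (simp add: GL_inv assms)
  thus ?thesis using inv_unique_left[OF GL_mult[OF assms]] by simp
qed

lemma mat_inv_one[simp]: "mat_inv mat_one = mat_one"
  by (rule sym, rule inv_unique_left) simp_all

definition mode1 :: "('k::comm_ring_1,'n::finite) mat \<Rightarrow> ('k,'n) tensor \<Rightarrow> ('k,'n) tensor" where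
  "mode1 P m = (\<lambda>i j k. \<Sum>a\<in>UNIV. P a i * m a j k)"
definition mode2 :: "('k::comm_ring_1,'n::finite) mat \<Rightarrow> ('k,'n) tensor \<Rightarrow> ('k,'n) tensor" where
  "mode2 P m = (\<lambda>i j k. \<Sum>b\<in>UNIV. P b j * m i b k)"
definition mode3 :: "('k::comm_ring_1,'n::finite) mat \<Rightarrow> ('k,'n) tensor \<Rightarrow> ('k,'n) tensor" where
  "mode3 P m = (\<lambda>i j k. \<Sum>c\<in>UNIV. P k c * m i j c)"

lemma act_modes: "act g m = mode1 (mat_inv g) (mode2 (mat_inv g) (mode3 g m))"
  unfolding act_def mode1_def mode2_def mode3_def
  by (intro ext) (simp add: sum_distrib_left mult_ac)

lemma mode1_comp: "mode1 P (mode1 Q m) = mode1 (mat_mult Q P) m"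
  unfolding mode1_def mat_mult_def
  apply (intro ext) apply (simp add: sum_distrib_left sum_distrib_right mult_ac) by (rule sum.swap)
lemma mode2_comp: "mode2 P (mode2 Q m) = mode2 (mat_mult Q P) m"
  unfolding mode2_def mat_mult_def
  apply (intro ext) apply (simp add: sum_distrib_left sum_distrib_right mult_ac) by (rule sum.swap)
lemma mode3_comp: "mode3 P (mode3 Q m) = mode3 (mat_mult P Q) m"
  unfolding mode3_def mat_mult_def
  apply (intro ext) apply (simp add: sum_distrib_left sum_distrib_right mult_ac) by (rule sum.swap)
lemma mode12: "mode1 P (mode2 Q m) = mode2 Q (mode1 P m)"
  unfolding mode1_def mode2_def
  apply (intro ext) apply (simp add: sum_distrib_left mult_ac) by (rule sum.swap)
lemma mode13: "mode1 P (mode3 Q m) = mode3 Q (mode1 P m)"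
  unfolding mode1_def mode3_def
  apply (intro ext) apply (simp add: sum_distrib_left mult_ac) by (rule sum.swap)
lemma mode23: "mode2 P (mode3 Q m) = mode3 Q (mode2 P m)"
  unfolding mode2_def mode3_def
  apply (intro ext) apply (simp add: sum_distrib_left mult_ac) by (rule sum.swap)
lemma mode1_one[simp]: "mode1 mat_one m = m"
  unfolding mode1_def mat_one_def by (intro ext) simp
lemma mode2_one[simp]: "mode2 mat_one m = m"
  unfolding mode2_def mat_one_def by (intro ext) simp
lemma mode3_one[simp]: "mode3 mat_one m = m"
  unfolding mode3_def mat_one_def by (intro ext) simp

lemma act_one[simp]: "act mat_one m = m"
  by (simp add: act_modes)

lemma act_comp: assumes "a \<in> GL" "b \<in> GL"
  shows "act a (act b m) = act (mat_mult a b) m"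
proof -
  have "act a (act b m) = mode1 (mat_inv a) (mode2 (mat_inv a) (mode3 a
          (mode1 (mat_inv b) (mode2 (mat_inv b) (mode3 b m)))))"
    by (simp add: act_modes)
  also have "\<dots> = mode1 (mat_inv a) (mode1 (mat_inv b) (mode2 (mat_inv a) (mode2 (mat_inv b) (mode3 a (mode3 b m)))))"
    by (simp add: mode12 mode13 mode23)
  also have "\<dots> = act (mat_mult a b) m"
    by (simp add: act_modes mode1_comp mode2_comp mode3_comp mat_inv_mult assms)
  finally show ?thesis .
qed

lemma polyfun_act_coord: "(\<lambda>m. act g m i j c) \<in> polyfun"
  unfolding act_def
  by (intro polyfun_sum polyfun.mult polyfun.const polyfun.coord) simp_all

lemma polyfun_act: "p \<in> polyfun \<Longrightarrow> (\<lambda>m. p (act g m)) \<in> polyfun"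
  using polyfun_comp[of p "act g"] polyfun_act_coord by blast




definition ratfun :: "('k::field,'n) tensor set \<Rightarrow> (('k,'n) tensor \<Rightarrow> 'k) \<Rightarrow> bool" where
  "ratfun U f \<longleftrightarrow> (\<exists>P Q. P \<in> polyfun \<and> Q \<in> polyfun \<and> (\<forall>m\<in>U. Q m \<noteq> 0 \<and> f m = P m / Q m))"

lemma ratfun_polyfun: "p \<in> polyfun \<Longrightarrow> ratfun U p"
  unfolding ratfun_def by (intro exI[of _ p] exI[of _ "\<lambda>_. 1"]) (simp add: polyfun.const)

lemma ratfun_const: "ratfun U (\<lambda>_. c)"
  by (rule ratfun_polyfun) (rule polyfun.const)

lemma ratfun_coord: "ratfun U (\<lambda>m. m i j k)"
  by (rule ratfun_polyfun) (rule polyfun.coord)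

lemma ratfun_cong: "ratfun U f \<Longrightarrow> (\<And>m. m \<in> U \<Longrightarrow> f m = g m) \<Longrightarrow> ratfun U g"
  unfolding ratfun_def by metis

lemma ratfun_add: assumes "ratfun U f" "ratfun U g" shows "ratfun U (\<lambda>m. f m + g m)"
proof -
  obtain P Q where 1: "P \<in> polyfun" "Q \<in> polyfun" "\<forall>m\<in>U. Q m \<noteq> 0 \<and> f m = P m / Q m"
    using assms(1) unfolding ratfun_def by blast
  obtain P' Q' where 2: "P' \<in> polyfun" "Q' \<in> polyfun" "\<forall>m\<in>U. Q' m \<noteq> 0 \<and> g m = P' m / Q' m"
    using assms(2) unfolding ratfun_def by blast
  have "(\<lambda>m. P m * Q' m + P' m * Q m) \<in> polyfun"
    using 1 2 by (intro polyfun.add polyfun.mult)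
  moreover have "(\<lambda>m. Q m * Q' m) \<in> polyfun" using 1 2 by (intro polyfun.mult)
  moreover have "\<forall>m\<in>U. Q m * Q' m \<noteq> 0 \<and> f m + g m = (P m * Q' m + P' m * Q m) / (Q m * Q' m)"
    using 1 2 by (simp add: field_simps)
  ultimately show ?thesis unfolding ratfun_def by blast
qed

lemma ratfun_mult: assumes "ratfun U f" "ratfun U g" shows "ratfun U (\<lambda>m. f m * g m)"
proof -
  obtain P Q where 1: "P \<in> polyfun" "Q \<in> polyfun" "\<forall>m\<in>U. Q m \<noteq> 0 \<and> f m = P m / Q m"
    using assms(1) unfolding ratfun_def by blast
  obtain P' Q' where 2: "P' \<in> polyfun" "Q' \<in> polyfun" "\<forall>m\<in>U. Q' m \<noteq> 0 \<and> g m = P' m / Q' m"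
    using assms(2) unfolding ratfun_def by blast
  have "(\<lambda>m. P m * P' m) \<in> polyfun"
    using 1 2 by (intro polyfun.mult)
  moreover have "(\<lambda>m. Q m * Q' m) \<in> polyfun" using 1 2 by (intro polyfun.mult)
  moreover have "\<forall>m\<in>U. Q m * Q' m \<noteq> 0 \<and> f m * g m = (P m * P' m) / (Q m * Q' m)"
    using 1 2 by (simp add: field_simps)
  ultimately show ?thesis unfolding ratfun_def by blast
qed

lemma ratfun_inverse: assumes "ratfun U f" "\<And>m. m \<in> U \<Longrightarrow> f m \<noteq> 0" shows "ratfun U (\<lambda>m. inverse (f m))"
proof -
  obtain P Q where 1: "P \<in> polyfun" "Q \<in> polyfun" "\<forall>m\<in>U. Q m \<noteq> 0 \<and> f m = P m / Q m"
    using assms(1) unfolding ratfun_def by blast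
  have "\<forall>m\<in>U. P m \<noteq> 0 \<and> inverse (f m) = Q m / P m"
    using 1 assms(2) by (auto simp: field_simps)
  with 1 show ?thesis unfolding ratfun_def by blast
qed

lemma ratfun_divide: assumes "ratfun U f" "ratfun U g" "\<And>m. m \<in> U \<Longrightarrow> g m \<noteq> 0"
  shows "ratfun U (\<lambda>m. f m / g m)"
  using ratfun_mult[OF assms(1) ratfun_inverse[OF assms(2,3)]] by (simp add: divide_inverse)

lemma ratfun_minus: assumes "ratfun U f" "ratfun U g" shows "ratfun U (\<lambda>m. f m - g m)"
  using ratfun_add[OF assms(1) ratfun_mult[OF ratfun_const[of U "-1"] assms(2)]] by simp

lemma ratfun_sum:
  "finite A \<Longrightarrow> (\<And>a. a \<in> A \<Longrightarrow> ratfun U (\<lambda>m. F a m)) \<Longrightarrow> ratfun U (\<lambda>m. \<Sum>a\<in>A. F a m)"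
proof (induction A rule: finite_induct)
  case empty then show ?case using ratfun_const[of U 0] by simp
next
  case (insert x A) then show ?case using ratfun_add[of U "F x" "\<lambda>m. \<Sum>a\<in>A. F a m"] by simp
qed

lemma ratfun_prod:
  "finite A \<Longrightarrow> (\<And>a. a \<in> A \<Longrightarrow> ratfun U (\<lambda>m. F a m)) \<Longrightarrow> ratfun U (\<lambda>m. \<Prod>a\<in>A. F a m)"
proof (induction A rule: finite_induct)
  case empty then show ?case using ratfun_const[of U 1] by simp
next
  case (insert x A) then show ?case using ratfun_mult[of U "F x" "\<lambda>m. \<Prod>a\<in>A. F a m"] by simp
qed

lemma ratfun_comp:
  assumes "p \<in> polyfun" "\<And>i j c. ratfun U (\<lambda>m. F m i j c)"
  shows "ratfun U (\<lambda>m. p (F m))"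
  using assms(1)
proof induction
  case (const c) then show ?case by (rule ratfun_const)
next
  case (coord i j k) then show ?case using assms(2) by simp
next
  case (add p q) then show ?case using ratfun_add[of U "\<lambda>m. p (F m)" "\<lambda>m. q (F m)"] by simp
next
  case (mult p q) then show ?case using ratfun_mult[of U "\<lambda>m. p (F m)" "\<lambda>m. q (F m)"] by simp
qed

lemma ratfun_det:
  fixes M :: "('k::field,'n) tensor \<Rightarrow> 'm::finite \<Rightarrow> 'm \<Rightarrow> 'k"
  assumes "\<And>i j. ratfun U (\<lambda>m. M m i j)"
  shows "ratfun U (\<lambda>m. det (\<chi> i j. M m i j))"
  unfolding det_def
  by (intro ratfun_sum ratfun_mult ratfun_const ratfun_prod) (simp_all add: assms)

lemma ratfun_act:
  assumes "\<And>i j. ratfun U (\<lambda>m. G m i j)" "\<And>i j. ratfun U (\<lambda>m. mat_inv (G m) i j)"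
  shows "ratfun U (\<lambda>m. act (G m) m i j k)"
  unfolding act_def
  by (intro ratfun_sum ratfun_mult ratfun_coord) (simp_all add: assms)

lemma ratfun_act_comp:
  assumes "p \<in> polyfun" "\<And>i j. ratfun U (\<lambda>m. G m i j)" "\<And>i j. ratfun U (\<lambda>m. mat_inv (G m) i j)"
  shows "ratfun U (\<lambda>m. p (act (G m) m))"
  using ratfun_comp[of p U "\<lambda>m. act (G m) m"] ratfun_act[OF assms(2,3)] assms(1) by blast




locale slice =
  fixes r :: "('k::field,'n::finite) tensor \<Rightarrow> ('k,'n) tensor"
    and D :: "('k,'n) tensor \<Rightarrow> 'k"
    and gam :: "('k,'n) tensor \<Rightarrow> ('k,'n) mat"
    and s0 :: "('k,'n) tensor"
  assumes inf: "infinite (UNIV::'k set)"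
    and rpoly: "\<And>i j c. (\<lambda>m. r m i j c) \<in> polyfun"
    and ridem: "\<And>m. r (r m) = r m"
    and Dpoly: "D \<in> polyfun"
    and s0: "r s0 = s0" "D s0 \<noteq> 0"
    and gGL: "\<And>m. D m \<noteq> 0 \<Longrightarrow> gam m \<in> GL"
    and gS: "\<And>m. D m \<noteq> 0 \<Longrightarrow> r (act (gam m) m) = act (gam m) m"
    and guniq: "\<And>m g. D m \<noteq> 0 \<Longrightarrow> g \<in> GL \<Longrightarrow> r (act g m) = act g m \<Longrightarrow> g = gam m"
    and grat: "\<And>i j. ratfun {m. D m \<noteq> 0} (\<lambda>m. gam m i j)"
    and girat: "\<And>i j. ratfun {m. D m \<noteq> 0} (\<lambda>m. mat_inv (gam m) i j)"
begin

lemma comp_r: "p \<in> polyfun \<Longrightarrow> (\<lambda>m. p (r m)) \<in> polyfun"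
  using polyfun_comp[of p r] rpoly by blast

lemma domain:
  fixes p q :: "('k,'n) tensor \<Rightarrow> 'k"
  assumes "p \<in> polyfun" "q \<in> polyfun" "\<And>m. p m * q m = 0"
  shows "(\<forall>m. p m = 0) \<or> (\<forall>m. q m = 0)"
  using polyfun_domain[OF inf assms] .

lemma nonzero_both:
  fixes p q :: "('k,'n) tensor \<Rightarrow> 'k"
  assumes "p \<in> polyfun" "q \<in> polyfun" "p a \<noteq> 0" "q b \<noteq> 0"
  shows "\<exists>m. p m \<noteq> 0 \<and> q m \<noteq> 0"
proof (rule ccontr)
  assume "\<not> ?thesis"
  hence "\<And>m. p m * q m = 0" by auto
  thus False using domain[OF assms(1,2)] assms(3,4) by blast
qed

lemma nonzero_both_S:
  fixes p q :: "('k,'n) tensor \<Rightarrow> 'k"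
  assumes "p \<in> polyfun" "q \<in> polyfun" "r a = a" "p a \<noteq> 0" "r b = b" "q b \<noteq> 0"
  shows "\<exists>m. r m = m \<and> p m \<noteq> 0 \<and> q m \<noteq> 0"
proof -
  obtain m where "p (r m) \<noteq> 0" "q (r m) \<noteq> 0"
    using nonzero_both[OF comp_r[OF assms(1)] comp_r[OF assms(2)], of a b] assms by auto
  thus ?thesis using ridem by blast
qed

lemma vanish_S:
  fixes F :: "('k,'n) tensor \<Rightarrow> 'k"
  assumes "F \<in> polyfun" "\<And>s. r s = s \<Longrightarrow> D s \<noteq> 0 \<Longrightarrow> F s = 0"
  shows "r s = s \<Longrightarrow> F s = 0"
proof -
  assume rs: "r s = s"
  have "\<And>m. F (r m) * D (r m) = 0" using assms(2) ridem by (metis mult_eq_0_iff)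
  from domain[OF comp_r[OF assms(1)] comp_r[OF Dpoly] this] have "\<forall>m. F (r m) = 0"
    using s0 by metis
  thus "F s = 0" using rs by metis
qed

lemma vanish_M:
  fixes F E :: "('k,'n) tensor \<Rightarrow> 'k"
  assumes "F \<in> polyfun" "E \<in> polyfun" "E a \<noteq> 0" "\<And>m. E m \<noteq> 0 \<Longrightarrow> F m = 0"
  shows "F m = 0"
proof -
  have "\<And>m. F m * E m = 0" using assms(4) by (metis mult_eq_0_iff)
  from domain[OF assms(1,2) this] show ?thesis using assms(3) by blast
qed

lemma gam_S: "r m = m \<Longrightarrow> D m \<noteq> 0 \<Longrightarrow> gam m = mat_one"
  using guniq[of m mat_one] by simp

lemma T_S: "r m = m \<Longrightarrow> D m \<noteq> 0 \<Longrightarrow> act (gam m) m = m"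
  using gam_S by simp

lemma T_cov: assumes "D m \<noteq> 0" "g \<in> GL" "D (act g m) \<noteq> 0"
  shows "act (gam (act g m)) (act g m) = act (gam m) m"
proof -
  define h where "h = mat_mult (gam m) (mat_inv g)"
  have hGL: "h \<in> GL" unfolding h_def by (intro GL_mult GL_inv_GL gGL assms)
  have "mat_mult h g = gam m" unfolding h_def by (simp add: mat_mult_assoc GL_inv assms)
  hence e: "act h (act g m) = act (gam m) m" using act_comp[OF hGL assms(2)] by simp
  hence "h = gam (act g m)" using guniq[OF assms(3) hGL] gS[OF assms(1)] by simp
  thus ?thesis using e by simp
qed

lemma Tq_rat: "p \<in> polyfun \<Longrightarrow> ratfun {m. D m \<noteq> 0} (\<lambda>m. p (act (gam m) m))"
  by (rule ratfun_act_comp[OF _ grat girat])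

lemma ratfun_obtain: assumes "ratfun {m. D m \<noteq> 0} f"
  shows "\<exists>P Q. P \<in> polyfun \<and> Q \<in> polyfun \<and> (\<forall>m. D m \<noteq> 0 \<longrightarrow> Q m \<noteq> 0 \<and> f m = P m / Q m)"
  using assms unfolding ratfun_def by auto

lemma irred: "irreducible_set {m. r m = m}"
  unfolding irreducible_set_def
proof (intro conjI allI impI)
  show "{m. r m = m} \<noteq> {}" using s0 by auto
  fix Z1 Z2 :: "('k,'n) tensor set"
  assume a: "zariski_closed Z1 \<and> zariski_closed Z2 \<and> {m. r m = m} \<subseteq> Z1 \<union> Z2"
  then obtain F1 F2 where F: "F1 \<subseteq> polyfun" "Z1 = {m. \<forall>f\<in>F1. f m = 0}" "F2 \<subseteq> polyfun" "Z2 = {m. \<forall>f\<in>F2. f m = 0}"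
    unfolding zariski_closed_def by blast
  show "{m. r m = m} \<subseteq> Z1 \<or> {m. r m = m} \<subseteq> Z2"
  proof (rule ccontr)
    assume "\<not> ?thesis"
    then obtain s1 s2 f1 f2 where s: "r s1 = s1" "f1 \<in> F1" "f1 s1 \<noteq> 0" "r s2 = s2" "f2 \<in> F2" "f2 s2 \<noteq> 0"
      using F by blast
    have "\<And>m. f1 (r m) * f2 (r m) = 0"
    proof -
      fix m
      have "r (r m) = r m" by (rule ridem)
      hence "r m \<in> Z1 \<union> Z2" using a by blast
      thus "f1 (r m) * f2 (r m) = 0" using F s by auto
    qed
    have "(\<lambda>m. f1 (r m)) \<in> polyfun" "(\<lambda>m. f2 (r m)) \<in> polyfun" using comp_r F s by blast+
    from domain[OF this \<open>\<And>m. f1 (r m) * f2 (r m) = 0\<close>] s show False by metis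
  qed
qed

lemma iso: "restriction_iso {m. r m = m}"
  unfolding restriction_iso_def
proof (intro conjI ballI impI)
  fix f :: "(('k,'n) tensor \<Rightarrow> 'k) \<times> (('k,'n) tensor \<Rightarrow> 'k)"
  assume f: "f \<in> ratM_inv"
  obtain p q where fpq: "f = (p, q)" by fastforce
  have pq: "p \<in> polyfun" "q \<in> polyfun" "\<exists>m. q m \<noteq> 0" and inv: "\<forall>g\<in>GL. eqM (p \<circ> act g, q \<circ> act g) (p, q)"
    using f unfolding fpq ratM_inv_def ratM_def by auto
  obtain m1 where "q m1 \<noteq> 0" using pq by blast
  then obtain m2 where m2: "q m2 \<noteq> 0" "D m2 \<noteq> 0" using nonzero_both[OF pq(2) Dpoly _ s0(2)] by blast
  define g where "g = gam m2"
  define h where "h = mat_inv g"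
  have gGL2: "g \<in> GL" unfolding g_def using gGL m2 by blast
  have hGL: "h \<in> GL" unfolding h_def using GL_inv_GL gGL2 by blast
  have "act h (act g m2) = m2" using act_comp[OF hGL gGL2] by (simp add: h_def GL_inv gGL2)
  moreover have "r (act g m2) = act g m2" using gS m2 g_def by blast
  ultimately have "(\<lambda>m. p (act h m), \<lambda>m. q (act h m)) \<in> ratS {m. r m = m}"
    unfolding ratS_def using polyfun_act pq m2 by (auto intro!: bexI[of _ "act g m2"])
  moreover have "eqM f (\<lambda>m. p (act h m), \<lambda>m. q (act h m))"
    using inv hGL unfolding eqM_def fpq by (auto simp: mult.commute)
  ultimately show "\<exists>f'\<in>ratS {m. r m = m}. eqM f f'" by blast
next
  fix f1 f2 :: "(('k,'n) tensor \<Rightarrow> 'k) \<times> (('k,'n) tensor \<Rightarrow> 'k)"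
  assume f1: "f1 \<in> ratM_inv \<inter> ratS {m. r m = m}" and f2: "f2 \<in> ratM_inv \<inter> ratS {m. r m = m}"
    and eq: "eqS {m. r m = m} f1 f2"
  obtain p1 q1 where f1pq: "f1 = (p1, q1)" by fastforce
  obtain p2 q2 where f2pq: "f2 = (p2, q2)" by fastforce
  have pq1: "p1 \<in> polyfun" "q1 \<in> polyfun" "\<exists>s. r s = s \<and> q1 s \<noteq> 0"
    and inv1: "\<forall>g\<in>GL. eqM (p1 \<circ> act g, q1 \<circ> act g) (p1, q1)"
    using f1 unfolding f1pq ratM_inv_def ratM_def ratS_def by auto
  have pq2: "p2 \<in> polyfun" "q2 \<in> polyfun" "\<exists>s. r s = s \<and> q2 s \<noteq> 0"
    and inv2: "\<forall>g\<in>GL. eqM (p2 \<circ> act g, q2 \<circ> act g) (p2, q2)"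
    using f2 unfolding f2pq ratM_inv_def ratM_def ratS_def by auto
  have eqS': "\<And>s. r s = s \<Longrightarrow> p1 s * q2 s = p2 s * q1 s" using eq unfolding eqS_def f1pq f2pq by auto
  obtain A1 B1 where AB1: "A1 \<in> polyfun" "B1 \<in> polyfun"
      "\<And>m. D m \<noteq> 0 \<Longrightarrow> B1 m \<noteq> 0 \<and> q1 (act (gam m) m) = A1 m / B1 m"
    using ratfun_obtain[OF Tq_rat[OF pq1(2)]] by blast
  obtain A2 B2 where AB2: "A2 \<in> polyfun" "B2 \<in> polyfun"
      "\<And>m. D m \<noteq> 0 \<Longrightarrow> B2 m \<noteq> 0 \<and> q2 (act (gam m) m) = A2 m / B2 m"
    using ratfun_obtain[OF Tq_rat[OF pq2(2)]] by blast
  define E where "E = (\<lambda>m. D m * (A1 m * A2 m))"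
  have Epoly: "E \<in> polyfun" unfolding E_def using Dpoly AB1 AB2 by (intro polyfun.mult)
  have q12: "(\<lambda>m. q1 m * q2 m) \<in> polyfun" using pq1 pq2 by (intro polyfun.mult)
  obtain sa sb where "r sa = sa" "q1 sa \<noteq> 0" "r sb = sb" "q2 sb \<noteq> 0" using pq1 pq2 by blast
  then obtain s' where "r s' = s'" "q1 s' * q2 s' \<noteq> 0"
    using nonzero_both_S[OF pq1(2) pq2(2)] by fastforce
  then obtain s where s: "r s = s" "q1 s * q2 s \<noteq> 0" "D s \<noteq> 0"
    using nonzero_both_S[OF q12 Dpoly _ _ s0] by blast
  have "E s \<noteq> 0"
  proof -
    have "act (gam s) s = s" using T_S s by blast
    hence "A1 s = q1 s * B1 s" "A2 s = q2 s * B2 s" using AB1(3)[of s] AB2(3)[of s] s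
      by (auto simp: field_simps)
    thus ?thesis unfolding E_def using s AB1(3)[of s] AB2(3)[of s] by auto
  qed
  have "\<And>m. E m \<noteq> 0 \<Longrightarrow> p1 m * q2 m - p2 m * q1 m = 0"
  proof -
    fix m assume "E m \<noteq> 0"
    hence Dm: "D m \<noteq> 0" and A: "A1 m \<noteq> 0" "A2 m \<noteq> 0" unfolding E_def by auto
    define g where "g = gam m"
    define t where "t = act g m"
    have gG: "g \<in> GL" using gGL Dm g_def by blast
    have ts: "r t = t" unfolding t_def g_def using gS Dm by blast
    have qt: "q1 t \<noteq> 0" "q2 t \<noteq> 0" using AB1(3)[OF Dm] AB2(3)[OF Dm] A unfolding t_def g_def by auto
    have i1: "p1 t * q1 m = p1 m * q1 t" using inv1 gG unfolding eqM_def t_def by auto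
    have i2: "p2 t * q2 m = p2 m * q2 t" using inv2 gG unfolding eqM_def t_def by auto
    have e: "p1 t * q2 t = p2 t * q1 t" using eqS' ts by blast
    have "(p1 m * q2 m) * (q1 t * q2 t) = (p2 m * q1 m) * (q1 t * q2 t)"
    proof -
      have "(p1 m * q2 m) * (q1 t * q2 t) = (p1 m * q1 t) * q2 m * q2 t" by (simp add: ac_simps)
      also have "\<dots> = (p1 t * q2 t) * q1 m * q2 m" by (simp add: i1[symmetric] ac_simps)
      also have "\<dots> = (p2 t * q1 t) * q1 m * q2 m" by (simp add: e)
      also have "\<dots> = (p2 m * q2 t) * q1 m * q1 t" by (simp add: i2[symmetric] ac_simps)
      also have "\<dots> = (p2 m * q1 m) * (q1 t * q2 t)" by (simp add: ac_simps)
      finally show ?thesis .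
    qed
    thus "p1 m * q2 m - p2 m * q1 m = 0" using qt by simp
  qed
  moreover have "(\<lambda>m. p1 m * q2 m - p2 m * q1 m) \<in> polyfun"
    using pq1 pq2 by (intro polyfun_minus polyfun.mult)
  ultimately have "\<And>m. p1 m * q2 m - p2 m * q1 m = 0"
    using vanish_M[OF _ Epoly \<open>E s \<noteq> 0\<close>] by blast
  thus "eqM f1 f2" unfolding eqM_def f1pq f2pq by (simp add: mult.commute)
next
  fix hh :: "(('k,'n) tensor \<Rightarrow> 'k) \<times> (('k,'n) tensor \<Rightarrow> 'k)"
  assume hh: "hh \<in> ratS {m. r m = m}"
  obtain p q where hpq: "hh = (p, q)" by fastforce
  have pq: "p \<in> polyfun" "q \<in> polyfun" "\<exists>s. r s = s \<and> q s \<noteq> 0"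
    using hh unfolding hpq ratS_def by auto
  obtain P Q1 where PQ1: "P \<in> polyfun" "Q1 \<in> polyfun"
      "\<And>m. D m \<noteq> 0 \<Longrightarrow> Q1 m \<noteq> 0 \<and> p (act (gam m) m) = P m / Q1 m"
    using ratfun_obtain[OF Tq_rat[OF pq(1)]] by blast
  obtain P2 Q2 where PQ2: "P2 \<in> polyfun" "Q2 \<in> polyfun"
      "\<And>m. D m \<noteq> 0 \<Longrightarrow> Q2 m \<noteq> 0 \<and> q (act (gam m) m) = P2 m / Q2 m"
    using ratfun_obtain[OF Tq_rat[OF pq(2)]] by blast
  define F where "F = (\<lambda>m. P m * Q2 m)"
  define G where "G = (\<lambda>m. P2 m * Q1 m)"
  have FG: "F \<in> polyfun" "G \<in> polyfun" unfolding F_def G_def using PQ1 PQ2 by (auto intro: polyfun.mult)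
  obtain s where s: "r s = s" "q s \<noteq> 0" "D s \<noteq> 0"
    using pq nonzero_both_S[OF pq(2) Dpoly _ _ s0] by blast
  have Tid: "\<And>s. r s = s \<Longrightarrow> D s \<noteq> 0 \<Longrightarrow> act (gam s) s = s" using T_S by blast
  have "G s \<noteq> 0"
    using PQ1(3)[OF s(3)] PQ2(3)[OF s(3)] Tid[OF s(1,3)] s(2) unfolding G_def
    by (auto simp: field_simps)
  have Fval: "\<And>m. D m \<noteq> 0 \<Longrightarrow> F m = p (act (gam m) m) * Q1 m * Q2 m"
    unfolding F_def using PQ1(3) by (auto simp: field_simps)
  have Gval: "\<And>m. D m \<noteq> 0 \<Longrightarrow> G m = q (act (gam m) m) * Q1 m * Q2 m"
    unfolding G_def using PQ2(3) by (auto simp: field_simps)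
  have inS: "(F, G) \<in> ratS {m. r m = m}" unfolding ratS_def using FG s \<open>G s \<noteq> 0\<close> by auto
  have inM: "(F, G) \<in> ratM" unfolding ratM_def using FG \<open>G s \<noteq> 0\<close> by auto
  have invar: "\<forall>g\<in>GL. eqM (F \<circ> act g, G \<circ> act g) (F, G)"
  proof
    fix g :: "('k,'n) mat" assume gG: "g \<in> GL"
    define E where "E = (\<lambda>m. D m * D (act g m))"
    have Ep: "E \<in> polyfun" unfolding E_def using Dpoly polyfun_act[OF Dpoly, of g] by (intro polyfun.mult)
    have "D (act g (act (mat_inv g) s0)) \<noteq> 0"
      using act_comp[OF gG GL_inv_GL[OF gG]] s0 by (simp add: GL_inv gG)
    then obtain a where "D a \<noteq> 0 \<and> D (act g a) \<noteq> 0"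
      using nonzero_both[OF Dpoly polyfun_act[OF Dpoly, of g] s0(2)] by blast
    hence "E a \<noteq> 0" unfolding E_def by simp
    have "\<And>m. E m \<noteq> 0 \<Longrightarrow> F (act g m) * G m - F m * G (act g m) = 0"
    proof -
      fix m assume "E m \<noteq> 0"
      hence D1: "D m \<noteq> 0" and D2: "D (act g m) \<noteq> 0" unfolding E_def by auto
      have "act (gam (act g m)) (act g m) = act (gam m) m" using T_cov[OF D1 gG D2] .
      thus "F (act g m) * G m - F m * G (act g m) = 0"
        using Fval[OF D1] Fval[OF D2] Gval[OF D1] Gval[OF D2] by (simp add: ac_simps)
    qed
    moreover have "(\<lambda>m. F (act g m) * G m - F m * G (act g m)) \<in> polyfun"
      using FG polyfun_act by (intro polyfun_minus polyfun.mult) auto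
    ultimately have "\<And>m. F (act g m) * G m - F m * G (act g m) = 0"
      using vanish_M[OF _ Ep \<open>E a \<noteq> 0\<close>] by blast
    thus "eqM (F \<circ> act g, G \<circ> act g) (F, G)" unfolding eqM_def by simp
  qed
  have "eqS {m. r m = m} (F, G) hh"
  proof -
    have "\<And>s. r s = s \<Longrightarrow> D s \<noteq> 0 \<Longrightarrow> F s * q s - p s * G s = 0"
      using Fval Gval Tid by (simp add: ac_simps)
    moreover have "(\<lambda>s. F s * q s - p s * G s) \<in> polyfun"
      using FG pq by (intro polyfun_minus polyfun.mult) auto
    ultimately have "\<And>s. r s = s \<Longrightarrow> F s * q s - p s * G s = 0"
      using vanish_S by blast
    thus ?thesis unfolding eqS_def hpq by simp
  qed
  moreover have "(F, G) \<in> ratM_inv \<inter> ratS {m. r m = m}" using inS inM invar unfolding ratM_inv_def by auto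
  ultimately show "\<exists>f\<in>ratM_inv \<inter> ratS {m. r m = m}. eqS {m. r m = m} f hh" by blast
qed

end



context slice begin

lemma S_eq:
  "{m. \<forall>s\<in>{f. \<exists>i j c. f = (\<lambda>m. m i j c - r m i j c) \<and> nonconstant f}. s m = 0} = {m. r m = m}"
  (is "{m. \<forall>s\<in>?Sp. s m = 0} = _")
proof (intro set_eqI iffI; simp only: mem_Collect_eq)
  fix m assume "r m = m" thus "\<forall>s\<in>?Sp. s m = 0" by auto
next
  fix m assume a: "\<forall>s\<in>?Sp. s m = 0"
  have "\<And>i j c. r m i j c = m i j c"
  proof -
    fix i j c
    show "r m i j c = m i j c"
    proof (cases "nonconstant (\<lambda>m. m i j c - r m i j c)")
      case True thus ?thesis using a by force
    next
      case False
      hence "m i j c - r m i j c = s0 i j c - r s0 i j c" unfolding nonconstant_def by blast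
      thus ?thesis using s0 by simp
    qed
  qed
  thus "r m = m" by (intro ext)
qed

lemma U_eq: "{m. \<forall>t\<in>(if nonconstant D then {D} else {}). t m \<noteq> 0} = {m. D m \<noteq> 0}"
proof (cases "nonconstant D")
  case False
  hence "\<And>m. D m = D s0" unfolding nonconstant_def by blast
  thus ?thesis using False s0 by (auto simp del: s0) metis
qed simp

lemma main:
  "\<exists>(Sp :: (('k,'n) tensor \<Rightarrow> 'k) set) (Tq :: (('k,'n) tensor \<Rightarrow> 'k) set).
           finite Sp \<and> finite Tq \<and> Sp \<subseteq> polyfun \<and> Tq \<subseteq> polyfun \<and>
           (\<forall>s\<in>Sp. nonconstant s) \<and> (\<forall>t\<in>Tq. nonconstant t) \<and>
           (let S = {m. \<forall>s\<in>Sp. s m = 0}; U = {m. \<forall>t\<in>Tq. t m \<noteq> 0} in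
              irreducible_set S \<and> restriction_iso S \<and>
              zariski_open U \<and> zariski_dense U \<and>
              (\<forall>a\<in>U. \<exists>!g. g \<in> GL \<and> act g a \<in> S))"
proof (intro exI conjI)
  let ?Sp = "{f. \<exists>i j c. f = (\<lambda>m. m i j c - r m i j c) \<and> nonconstant f}"
  let ?Tq = "if nonconstant D then {D} else {}"
  have "?Sp \<subseteq> (\<lambda>(i,j,c). (\<lambda>m. m i j c - r m i j c)) ` UNIV"
    by (auto intro!: image_eqI[where x="(_,_,_)"])
  thus "finite ?Sp" by (rule finite_subset) simp
  show "finite ?Tq" by simp
  show "?Sp \<subseteq> polyfun" using rpoly by (auto intro!: polyfun_minus polyfun.coord)
  show "?Tq \<subseteq> polyfun" using Dpoly by auto
  show "\<forall>s\<in>?Sp. nonconstant s" by auto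
  show "\<forall>t\<in>?Tq. nonconstant t" by auto
  show "let S = {m. \<forall>s\<in>?Sp. s m = 0}; U = {m. \<forall>t\<in>?Tq. t m \<noteq> 0} in
              irreducible_set S \<and> restriction_iso S \<and>
              zariski_open U \<and> zariski_dense U \<and>
              (\<forall>a\<in>U. \<exists>!g. g \<in> GL \<and> act g a \<in> S)"
    unfolding Let_def S_eq U_eq
  proof (intro conjI irred iso)
    show "zariski_open {m. D m \<noteq> 0}"
      unfolding zariski_open_def zariski_closed_def
      by (intro exI[of _ "{D}"]) (auto simp: Dpoly)
    show "zariski_dense {m. D m \<noteq> 0}"
      unfolding zariski_dense_def
    proof (intro allI impI)
      fix W :: "('k,'n) tensor set" assume W: "zariski_open W \<and> W \<noteq> {}"
      then obtain F where F: "F \<subseteq> polyfun" "- W = {m. \<forall>f\<in>F. f m = 0}"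
        unfolding zariski_open_def zariski_closed_def by blast
      obtain w where "w \<in> W" using W by blast
      then obtain f where f: "f \<in> F" "f w \<noteq> 0" using F by blast
      then obtain m where "f m \<noteq> 0" "D m \<noteq> 0" using nonzero_both[OF _ Dpoly _ s0(2)] F by blast
      hence "m \<in> W" using F f by blast
      thus "W \<inter> {m. D m \<noteq> 0} \<noteq> {}" using \<open>D m \<noteq> 0\<close> by blast
    qed
    show "\<forall>a\<in>{m. D m \<noteq> 0}. \<exists>!g. g \<in> GL \<and> act g a \<in> {m. r m = m}"
      using gGL gS guniq by (auto intro!: ex1I[of _ "gam _"])
  qed
qed

end



definition mulv :: "('k::comm_ring_1,'n::finite) tensor \<Rightarrow> ('n \<Rightarrow> 'k) \<Rightarrow> ('n \<Rightarrow> 'k) \<Rightarrow> 'n \<Rightarrow> 'k" where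
  "mulv m x y = (\<lambda>c. \<Sum>a\<in>UNIV. \<Sum>b\<in>UNIV. x a * y b * m a b c)"
definition mv :: "('k::comm_ring_1,'n::finite) mat \<Rightarrow> ('n \<Rightarrow> 'k) \<Rightarrow> 'n \<Rightarrow> 'k" where
  "mv P x = (\<lambda>a. \<Sum>i\<in>UNIV. P a i * x i)"
definition phi0 :: "('k::comm_ring_1,'n::finite) tensor \<Rightarrow> 'n \<Rightarrow> 'k" where
  "phi0 m c = (\<Sum>d\<in>UNIV. m c d d)"
definition phiv :: "('k::comm_ring_1,'n::finite) tensor \<Rightarrow> ('n \<Rightarrow> 'k) \<Rightarrow> 'k" where
  "phiv m y = (\<Sum>c\<in>UNIV. y c * phi0 m c)"
definition alpha :: "('k::comm_ring_1,'n::finite) tensor \<Rightarrow> 'n \<Rightarrow> 'n \<Rightarrow> 'k" where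
  "alpha m i j = (\<Sum>c\<in>UNIV. m i j c * phi0 m c)"
definition Aform :: "('k::comm_ring_1,'n::finite) tensor \<Rightarrow> ('n \<Rightarrow> 'k) \<Rightarrow> ('n \<Rightarrow> 'k) \<Rightarrow> 'k" where
  "Aform m x y = phiv m (mulv m x y)"
definition dlt :: "'n \<Rightarrow> 'n \<Rightarrow> 'k::comm_ring_1" where
  "dlt a = (\<lambda>i. if i = a then 1 else 0)"

lemma mulv_mode1: "mulv (mode1 P m) x y = mulv m (mv P x) y"
proof (rule ext)
  fix c
  have "mulv (mode1 P m) x y c = (\<Sum>a'\<in>UNIV. \<Sum>b\<in>UNIV. \<Sum>a\<in>UNIV. x a' * y b * (P a a' * m a b c))"
    unfolding mulv_def mode1_def by (simp add: sum_distrib_left)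
  also have "\<dots> = (\<Sum>a'\<in>UNIV. \<Sum>a\<in>UNIV. \<Sum>b\<in>UNIV. x a' * y b * (P a a' * m a b c))"
    by (rule sum.cong[OF refl], rule sum.swap)
  also have "\<dots> = (\<Sum>a\<in>UNIV. \<Sum>a'\<in>UNIV. \<Sum>b\<in>UNIV. x a' * y b * (P a a' * m a b c))"
    by (rule sum.swap)
  also have "\<dots> = (\<Sum>a\<in>UNIV. \<Sum>b\<in>UNIV. \<Sum>a'\<in>UNIV. x a' * y b * (P a a' * m a b c))"
    by (rule sum.cong[OF refl], rule sum.swap)
  also have "\<dots> = mulv m (mv P x) y c"
    unfolding mulv_def mv_def by (simp add: sum_distrib_left sum_distrib_right mult_ac)
  finally show "mulv (mode1 P m) x y c = mulv m (mv P x) y c" .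
qed

lemma mulv_mode2: "mulv (mode2 P m) x y = mulv m x (mv P y)"
proof (rule ext)
  fix c
  have "mulv (mode2 P m) x y c = (\<Sum>a\<in>UNIV. \<Sum>b'\<in>UNIV. \<Sum>b\<in>UNIV. x a * y b' * (P b b' * m a b c))"
    unfolding mulv_def mode2_def by (simp add: sum_distrib_left)
  also have "\<dots> = (\<Sum>a\<in>UNIV. \<Sum>b\<in>UNIV. \<Sum>b'\<in>UNIV. x a * y b' * (P b b' * m a b c))"
    by (rule sum.cong[OF refl], rule sum.swap)
  also have "\<dots> = mulv m x (mv P y) c"
    unfolding mulv_def mv_def by (simp add: sum_distrib_left sum_distrib_right mult_ac)
  finally show "mulv (mode2 P m) x y c = mulv m x (mv P y) c" .
qed

lemma mulv_mode3: "mulv (mode3 P m) x y = mv P (mulv m x y)"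
proof (rule ext)
  fix k
  have "mulv (mode3 P m) x y k = (\<Sum>a\<in>UNIV. \<Sum>b\<in>UNIV. \<Sum>c\<in>UNIV. x a * y b * (P k c * m a b c))"
    unfolding mulv_def mode3_def by (simp add: sum_distrib_left)
  also have "\<dots> = (\<Sum>a\<in>UNIV. \<Sum>c\<in>UNIV. \<Sum>b\<in>UNIV. x a * y b * (P k c * m a b c))"
    by (rule sum.cong[OF refl], rule sum.swap)
  also have "\<dots> = (\<Sum>c\<in>UNIV. \<Sum>a\<in>UNIV. \<Sum>b\<in>UNIV. x a * y b * (P k c * m a b c))"
    by (rule sum.swap)
  also have "\<dots> = mv P (mulv m x y) k"
    unfolding mulv_def mv_def by (simp add: sum_distrib_left sum_distrib_right mult_ac)
  finally show "mulv (mode3 P m) x y k = mv P (mulv m x y) k" .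
qed

lemma mv_comp: "mv P (mv Q x) = mv (mat_mult P Q) x"
proof (rule ext)
  fix a
  have "mv P (mv Q x) a = (\<Sum>i\<in>UNIV. \<Sum>j\<in>UNIV. P a i * (Q i j * x j))"
    unfolding mv_def by (simp add: sum_distrib_left)
  also have "\<dots> = (\<Sum>j\<in>UNIV. \<Sum>i\<in>UNIV. P a i * (Q i j * x j))" by (rule sum.swap)
  also have "\<dots> = mv (mat_mult P Q) x a"
    unfolding mv_def mat_mult_def by (simp add: sum_distrib_left sum_distrib_right mult_ac)
  finally show "mv P (mv Q x) a = mv (mat_mult P Q) x a" .
qed

lemma mv_one[simp]: "mv mat_one x = x"
  unfolding mv_def mat_one_def by (rule ext) simp

lemma mv_inv_cancel: "g \<in> GL \<Longrightarrow> mv (mat_inv g) (mv g x) = x" "g \<in> GL \<Longrightarrow> mv g (mv (mat_inv g) x) = x"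
  by (simp_all add: mv_comp GL_inv)

lemma phiv_mode1: "phiv (mode1 P m) y = phiv m (mv P y)"
proof -
  have "phiv (mode1 P m) y = (\<Sum>c\<in>UNIV. \<Sum>d\<in>UNIV. \<Sum>a\<in>UNIV. y c * (P a c * m a d d))"
    unfolding phiv_def phi0_def mode1_def by (simp add: sum_distrib_left)
  also have "\<dots> = (\<Sum>c\<in>UNIV. \<Sum>a\<in>UNIV. \<Sum>d\<in>UNIV. y c * (P a c * m a d d))"
    by (rule sum.cong[OF refl], rule sum.swap)
  also have "\<dots> = (\<Sum>a\<in>UNIV. \<Sum>c\<in>UNIV. \<Sum>d\<in>UNIV. y c * (P a c * m a d d))"
    by (rule sum.swap)
  also have "\<dots> = phiv m (mv P y)"
    unfolding phiv_def phi0_def mv_def by (simp add: sum_distrib_left sum_distrib_right mult_ac)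
  finally show ?thesis .
qed

lemma phi0_mode23: assumes "mat_mult P Q = mat_one" shows "phi0 (mode2 P (mode3 Q m)) = phi0 m"
proof (rule ext)
  fix a
  have "phi0 (mode2 P (mode3 Q m)) a = (\<Sum>d\<in>UNIV. \<Sum>b\<in>UNIV. \<Sum>c\<in>UNIV. P b d * (Q d c * m a b c))"
    unfolding phi0_def mode2_def mode3_def by (simp add: sum_distrib_left)
  also have "\<dots> = (\<Sum>b\<in>UNIV. \<Sum>d\<in>UNIV. \<Sum>c\<in>UNIV. P b d * (Q d c * m a b c))"
    by (rule sum.swap)
  also have "\<dots> = (\<Sum>b\<in>UNIV. \<Sum>c\<in>UNIV. \<Sum>d\<in>UNIV. P b d * (Q d c * m a b c))"
    by (rule sum.cong[OF refl], rule sum.swap)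
  also have "\<dots> = (\<Sum>b\<in>UNIV. \<Sum>c\<in>UNIV. mat_mult P Q b c * m a b c)"
    unfolding mat_mult_def by (simp add: sum_distrib_left sum_distrib_right mult_ac)
  also have "\<dots> = phi0 m a" unfolding assms phi0_def mat_one_def by simp
  finally show "phi0 (mode2 P (mode3 Q m)) a = phi0 m a" .
qed

lemma phiv_act: assumes "g \<in> GL" shows "phiv (act g m) (mv g y) = phiv m y"
proof -
  have "phiv (act g m) (mv g y) = phiv (mode2 (mat_inv g) (mode3 g m)) (mv (mat_inv g) (mv g y))"
    by (simp add: act_modes phiv_mode1)
  also have "\<dots> = phiv m y"
    unfolding phiv_def phi0_mode23[OF GL_inv(2)[OF assms]] mv_inv_cancel(1)[OF assms] ..
  finally show ?thesis .
qed

lemma mulv_act: assumes "g \<in> GL" shows "mulv (act g m) (mv g x) (mv g y) = mv g (mulv m x y)"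
  by (simp add: act_modes mulv_mode1 mulv_mode2 mulv_mode3 mv_inv_cancel assms)

lemma Aform_act: assumes "g \<in> GL" shows "Aform (act g m) (mv g x) (mv g y) = Aform m x y"
  unfolding Aform_def mulv_act[OF assms] phiv_act[OF assms] ..

lemma Aform_expand: "Aform m x y = (\<Sum>i\<in>UNIV. \<Sum>j\<in>UNIV. x i * y j * alpha m i j)"
proof -
  have "Aform m x y = (\<Sum>c\<in>UNIV. \<Sum>i\<in>UNIV. \<Sum>j\<in>UNIV. x i * y j * (m i j c * phi0 m c))"
    unfolding Aform_def phiv_def mulv_def by (simp add: sum_distrib_left sum_distrib_right mult_ac)
  also have "\<dots> = (\<Sum>i\<in>UNIV. \<Sum>c\<in>UNIV. \<Sum>j\<in>UNIV. x i * y j * (m i j c * phi0 m c))"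
    by (rule sum.swap)
  also have "\<dots> = (\<Sum>i\<in>UNIV. \<Sum>j\<in>UNIV. \<Sum>c\<in>UNIV. x i * y j * (m i j c * phi0 m c))"
    by (rule sum.cong[OF refl], rule sum.swap)
  also have "\<dots> = (\<Sum>i\<in>UNIV. \<Sum>j\<in>UNIV. x i * y j * alpha m i j)"
    unfolding alpha_def by (simp add: sum_distrib_left)
  finally show ?thesis .
qed

lemma Aform_expand2: "Aform m x y = (\<Sum>j\<in>UNIV. y j * (\<Sum>i\<in>UNIV. x i * alpha m i j))"
  unfolding Aform_expand by (subst sum.swap) (simp add: sum_distrib_left mult_ac)

lemma phiv_expand: "phiv m y = (\<Sum>j\<in>UNIV. y j * phi0 m j)"
  unfolding phiv_def ..

lemma sum_dlt[simp]: fixes a :: "'n::finite" shows "(\<Sum>i\<in>UNIV. dlt a i * f i) = f a" "(\<Sum>i\<in>UNIV. f i * dlt a i) = f a"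
  unfolding dlt_def by (simp_all add: sum.delta sum.delta')

lemma mulv_dlt: "mulv m (dlt a) (dlt b) = (\<lambda>c. m a b c)"
proof (rule ext)
  fix c
  have "mulv m (dlt a) (dlt b) c = (\<Sum>aa\<in>UNIV. dlt a aa * (\<Sum>ba\<in>UNIV. dlt b ba * m aa ba c))"
    unfolding mulv_def by (simp only: sum_distrib_left mult.assoc)
  also have "\<dots> = m a b c" by simp
  finally show "mulv m (dlt a) (dlt b) c = m a b c" .
qed

lemma eq_forall_y:
  "(\<forall>y. Aform m x y = phiv m y) \<longleftrightarrow> (\<forall>j. (\<Sum>i\<in>UNIV. x i * alpha m i j) = phi0 m j)"
proof
  assume a: "\<forall>y. Aform m x y = phiv m y"
  show "\<forall>j. (\<Sum>i\<in>UNIV. x i * alpha m i j) = phi0 m j"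
  proof
    fix j
    show "(\<Sum>i\<in>UNIV. x i * alpha m i j) = phi0 m j"
      using a[rule_format, of "dlt j"] unfolding Aform_expand2 phiv_expand by simp
  qed
next
  assume "\<forall>j. (\<Sum>i\<in>UNIV. x i * alpha m i j) = phi0 m j"
  thus "\<forall>y. Aform m x y = phiv m y" unfolding Aform_expand2 phiv_expand by simp
qed

definition nd :: "('k::comm_ring_1,'n::finite) tensor \<Rightarrow> bool" where
  "nd m \<longleftrightarrow> (\<forall>x. (\<forall>j. (\<Sum>i\<in>UNIV. x i * alpha m i j) = 0) \<longrightarrow> x = (\<lambda>_. 0))"

lemma nd_Aform: "nd m \<longleftrightarrow> (\<forall>x. (\<forall>y. Aform m x y = 0) \<longrightarrow> x = (\<lambda>_. 0))"
proof -
  have "\<And>x. (\<forall>y. Aform m x y = 0) \<longleftrightarrow> (\<forall>j. (\<Sum>i\<in>UNIV. x i * alpha m i j) = 0)"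
  proof
    fix x assume "\<forall>y. Aform m x y = 0"
    thus "\<forall>j. (\<Sum>i\<in>UNIV. x i * alpha m i j) = 0"
      unfolding Aform_expand2 by (metis sum_dlt(1))
  next
    fix x assume "\<forall>j. (\<Sum>i\<in>UNIV. x i * alpha m i j) = 0"
    thus "\<forall>y. Aform m x y = 0" unfolding Aform_expand2 by simp
  qed
  thus ?thesis unfolding nd_def by simp
qed

lemma mv_zero: "mv P (\<lambda>_. 0) = (\<lambda>_. 0)" unfolding mv_def by simp

lemma nd_act: assumes g: "g \<in> GL" and "nd m" shows "nd (act g m)"
  unfolding nd_Aform
proof (intro allI impI)
  fix x assume a: "\<forall>y. Aform (act g m) x y = 0"
  have "\<forall>y. Aform m (mv (mat_inv g) x) y = 0"
  proof
    fix y
    have "Aform m (mv (mat_inv g) x) y = Aform (act g m) (mv g (mv (mat_inv g) x)) (mv g y)"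
      by (rule Aform_act[OF g, symmetric])
    also have "\<dots> = 0" using a mv_inv_cancel(2)[OF g] by simp
    finally show "Aform m (mv (mat_inv g) x) y = 0" .
  qed
  hence "mv (mat_inv g) x = (\<lambda>_. 0)" using assms(2) unfolding nd_Aform by blast
  hence "mv g (mv (mat_inv g) x) = (\<lambda>_. 0)" by (simp add: mv_zero)
  thus "x = (\<lambda>_. 0)" using mv_inv_cancel(2)[OF g] by simp
qed




lemma polyfun_det:
  fixes M :: "('k::comm_ring_1,'n::finite) tensor \<Rightarrow> 'm::finite \<Rightarrow> 'm \<Rightarrow> 'k"
  assumes "\<And>i j. (\<lambda>m. M m i j) \<in> polyfun"
  shows "(\<lambda>m. det (\<chi> i j. M m i j)) \<in> polyfun"
  unfolding det_def
  by (intro polyfun_sum polyfun.mult polyfun.const polyfun_prod) (simp_all add: assms)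

lemma ratfun_mono: "ratfun U f \<Longrightarrow> V \<subseteq> U \<Longrightarrow> ratfun V f"
  unfolding ratfun_def by blast

lemma phi0_poly: "(\<lambda>m. phi0 m c) \<in> polyfun"
  unfolding phi0_def by (intro polyfun_sum polyfun.coord) simp_all

lemma alpha_poly: "(\<lambda>m. alpha m i j) \<in> polyfun"
  unfolding alpha_def by (intro polyfun_sum polyfun.mult polyfun.coord phi0_poly) simp_all

definition Mt :: "('k::comm_ring_1,'n::finite) tensor \<Rightarrow> 'k^'n^'n" where
  "Mt m = (\<chi> j i. alpha m i j)"
definition dA :: "('k::comm_ring_1,'n::finite) tensor \<Rightarrow> 'k" where
  "dA m = det (Mt m)"

lemma dA_poly: "dA \<in> polyfun"
  unfolding dA_def Mt_def using polyfun_det[of "\<lambda>m j i. alpha m i j", OF alpha_poly] .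

lemma Mt_mult: "(Mt m *v xv) $ j = (\<Sum>i\<in>UNIV. xv $ i * alpha m i j)"
  unfolding Mt_def matrix_vector_mult_def by (simp add: mult.commute)

lemma dA_nd:
  fixes m :: "('k::field,'n::finite) tensor"
  shows "dA m \<noteq> 0 \<longleftrightarrow> nd m"
proof -
  have "dA m \<noteq> 0 \<longleftrightarrow> (\<forall>xv. Mt m *v xv = 0 \<longrightarrow> xv = 0)"
    unfolding dA_def by (simp add: invertible_det_nz[symmetric] invertible_left_inverse matrix_left_invertible_ker)
  also have "\<dots> \<longleftrightarrow> nd m"
  proof
    assume a: "\<forall>xv. Mt m *v xv = 0 \<longrightarrow> xv = 0"
    show "nd m" unfolding nd_def
    proof (intro allI impI)
      fix x :: "'n \<Rightarrow> 'k" assume "\<forall>j. (\<Sum>i\<in>UNIV. x i * alpha m i j) = 0"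
      hence "Mt m *v (\<chi> i. x i) = 0" by (simp add: vec_eq_iff Mt_mult)
      hence "(\<chi> i. x i) = 0" using a by blast
      thus "x = (\<lambda>_. 0)" by (simp add: vec_eq_iff fun_eq_iff)
    qed
  next
    assume "nd m"
    show "\<forall>xv. Mt m *v xv = 0 \<longrightarrow> xv = 0"
    proof (intro allI impI)
      fix xv :: "'k^'n" assume "Mt m *v xv = 0"
      hence "\<forall>j. (\<Sum>i\<in>UNIV. xv $ i * alpha m i j) = 0" by (simp add: vec_eq_iff Mt_mult)
      hence "(\<lambda>i. xv $ i) = (\<lambda>_. 0)" using \<open>nd m\<close> unfolding nd_def by blast
      thus "xv = 0" by (simp add: vec_eq_iff fun_eq_iff)
    qed
  qed
  finally show ?thesis .
qed

definition u :: "('k::field,'n::finite) tensor \<Rightarrow> 'n \<Rightarrow> 'k" where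
  "u m = (\<lambda>k. det (\<chi> i j. if j = k then phi0 m i else alpha m j i) / dA m)"

lemma u_vec: "(\<chi> k. u m k) = (\<chi> k. det (\<chi> i j. if j = k then (\<chi> j. phi0 m j) $ i else Mt m $ i $ j) / det (Mt m))"
  unfolding u_def dA_def Mt_def by (simp only: vec_lambda_beta)

lemma u_eq: assumes "dA m \<noteq> 0" shows "\<forall>j. (\<Sum>i\<in>UNIV. u m i * alpha m i j) = phi0 m j"
proof -
  have "Mt m *v (\<chi> k. u m k) = (\<chi> j. phi0 m j)"
    unfolding u_vec using cramer[of "Mt m"] assms unfolding dA_def by blast
  thus ?thesis by (simp add: vec_eq_iff Mt_mult)
qed

lemma u_unique: assumes "dA m \<noteq> 0" "\<forall>j. (\<Sum>i\<in>UNIV. x i * alpha m i j) = phi0 m j"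
  shows "x = u m"
proof -
  have "Mt m *v (\<chi> k. x k) = (\<chi> j. phi0 m j)" using assms(2) by (simp add: vec_eq_iff Mt_mult)
  hence "(\<chi> k. x k) = (\<chi> k. u m k)"
    unfolding u_vec using cramer[of "Mt m"] assms(1) unfolding dA_def by blast
  thus ?thesis by (simp add: vec_eq_iff fun_eq_iff)
qed

lemma u_rat: assumes "\<And>m. m \<in> U \<Longrightarrow> dA m \<noteq> 0" shows "ratfun U (\<lambda>m. u m k)"
  unfolding u_def
proof (rule ratfun_divide)
  show "ratfun U (\<lambda>m. det (\<chi> i j. if j = k then phi0 m i else alpha m j i))"
    apply (rule ratfun_det)
    subgoal for i j by (cases "j = k") (simp_all add: ratfun_polyfun phi0_poly alpha_poly)
    done
  show "ratfun U dA" by (rule ratfun_polyfun[OF dA_poly])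
qed (use assms in auto)

lemma u_act: assumes g: "g \<in> GL" and d: "dA m \<noteq> 0"
  shows "dA (act g m) \<noteq> 0" "u (act g m) = mv g (u m)"
proof -
  show d2: "dA (act g m) \<noteq> 0" using nd_act[OF g] d dA_nd by blast
  have "\<forall>y. Aform m (u m) y = phiv m y" using u_eq[OF d] eq_forall_y by blast
  have "\<forall>y. Aform (act g m) (mv g (u m)) y = phiv (act g m) y"
  proof
    fix y
    have "Aform (act g m) (mv g (u m)) y = Aform (act g m) (mv g (u m)) (mv g (mv (mat_inv g) y))"
      using mv_inv_cancel(2)[OF g] by simp
    also have "\<dots> = Aform m (u m) (mv (mat_inv g) y)" by (rule Aform_act[OF g])
    also have "\<dots> = phiv m (mv (mat_inv g) y)" using \<open>\<forall>y. Aform m (u m) y = phiv m y\<close> by blast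
    also have "\<dots> = phiv (act g m) (mv g (mv (mat_inv g) y))" by (rule phiv_act[OF g, symmetric])
    also have "\<dots> = phiv (act g m) y" using mv_inv_cancel(2)[OF g] by simp
    finally show "Aform (act g m) (mv g (u m)) y = phiv (act g m) y" .
  qed
  hence "\<forall>j. (\<Sum>i\<in>UNIV. mv g (u m) i * alpha (act g m) i j) = phi0 (act g m) j"
    using eq_forall_y by blast
  thus "u (act g m) = mv g (u m)" using u_unique[OF d2] by metis
qed

primrec v :: "('k::field,'n::finite) tensor \<Rightarrow> nat \<Rightarrow> 'n \<Rightarrow> 'k" where
  "v m 0 = u m"
| "v m (Suc k) = mulv m (u m) (v m k)"

lemma v_act: assumes g: "g \<in> GL" and d: "dA m \<noteq> 0"
  shows "v (act g m) k = mv g (v m k)"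
  by (induction k) (simp_all add: u_act[OF g d] mulv_act[OF g])

lemma v_rat: assumes "\<And>m. m \<in> U \<Longrightarrow> dA m \<noteq> 0" shows "ratfun U (\<lambda>m. v m k c)"
proof (induction k arbitrary: c)
  case 0 then show ?case using u_rat[OF assms] by simp
next
  case (Suc k)
  show ?case unfolding v.simps mulv_def
    by (intro ratfun_sum ratfun_mult u_rat[OF assms] Suc ratfun_coord) simp_all
qed




definition tv :: "('k::comm_ring_1,'n::finite) mat \<Rightarrow> 'k^'n^'n" where
  "tv M = (\<chi> i j. M i j)"

lemma tv_mult: "tv (mat_mult A B) = tv A ** tv B"
  unfolding tv_def mat_mult_def matrix_matrix_mult_def by (simp add: vec_eq_iff)

lemma tv_one: "tv mat_one = mat 1"
  unfolding tv_def mat_one_def mat_def by (simp add: vec_eq_iff)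

lemma tv_inj: "tv A = tv B \<Longrightarrow> A = B"
  unfolding tv_def by (simp add: vec_eq_iff fun_eq_iff)

lemma left_right_inv:
  fixes A B :: "('k::field,'n::finite) mat"
  assumes "mat_mult A B = mat_one" shows "mat_mult B A = mat_one"
proof -
  have "tv A ** tv B = mat 1" using assms by (metis tv_mult tv_one)
  hence "tv B ** tv A = mat 1" using matrix_left_right_inverse by blast
  hence "tv (mat_mult B A) = tv mat_one" by (simp add: tv_mult tv_one)
  thus ?thesis by (rule tv_inj)
qed

locale enum =
  fixes e :: "nat \<Rightarrow> 'n::finite"
  assumes bij: "bij_betw e {..<CARD('n)} UNIV"
begin


definition idx :: "'n \<Rightarrow> nat" where "idx = the_inv_into {..<CARD('n)} e"

lemma N_pos: "CARD('n) > 0" by simp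

lemma e_idx[simp]: "e (idx j) = j"
  unfolding idx_def using bij by (simp add: bij_betw_def f_the_inv_into_f)

lemma idx_lt: "idx j < CARD('n)"
  unfolding idx_def using the_inv_into_into[of e "{..<CARD('n)}" j "{..<CARD('n)}"] bij
  unfolding bij_betw_def by auto

lemma idx_e[simp]: "k < CARD('n) \<Longrightarrow> idx (e k) = k"
  unfolding idx_def using bij by (simp add: bij_betw_def the_inv_into_f_f)

lemma e_inj: "k < CARD('n) \<Longrightarrow> k' < CARD('n) \<Longrightarrow> e k = e k' \<Longrightarrow> k = k'"
  by (metis idx_e)

definition "z = e 0"
definition "l = e (CARD('n) - 1)"
definition "nxt j = e (Suc (idx j))"

lemma ne_l: "j \<noteq> l \<Longrightarrow> Suc (idx j) < CARD('n)"
proof -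
  assume "j \<noteq> l"
  hence "idx j \<noteq> CARD('n) - 1" unfolding l_def by (metis e_idx)
  thus ?thesis using idx_lt[of j] by simp
qed

lemma nxt_ne: "j \<noteq> l \<Longrightarrow> nxt j \<noteq> j"
proof
  assume a: "j \<noteq> l" "nxt j = j"
  hence "e (Suc (idx j)) = e (idx j)" unfolding nxt_def by simp
  hence "Suc (idx j) = idx j" using e_inj ne_l[OF a(1)] idx_lt by blast
  thus False by simp
qed

lemma ek_ne_l: "Suc k < CARD('n) \<Longrightarrow> e k \<noteq> l"
  unfolding l_def using e_inj by (metis Suc_lessD diff_Suc_1 less_irrefl_nat less_Suc_eq_0_disj
     less_imp_diff_less lessI not_less_eq)

lemma nxt_e: "Suc k < CARD('n) \<Longrightarrow> nxt (e k) = e (Suc k)"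
  unfolding nxt_def by simp

lemma ne_z_l: "i \<noteq> z \<Longrightarrow> l \<noteq> z"
proof
  assume "i \<noteq> z" "l = z"
  hence "CARD('n) - 1 = 0" unfolding l_def z_def using e_inj by (metis N_pos diff_less zero_less_one)
  hence "idx i = 0" using idx_lt[of i] by simp
  hence "i = z" unfolding z_def by (metis e_idx)
  thus False using \<open>i \<noteq> z\<close> by simp
qed

lemma sum_split: "finite A \<Longrightarrow> a \<in> A \<Longrightarrow> (\<Sum>c\<in>A. f c) = f a + (\<Sum>c\<in>A - {a}. f c)"
  by (simp add: sum.remove)

definition Spred :: "('k::field,'n) tensor \<Rightarrow> bool" where
  "Spred m \<longleftrightarrow> (\<forall>j. j \<noteq> l \<longrightarrow> (\<forall>c. m z j c = dlt (nxt j) c)) \<and> (\<Sum>c\<in>UNIV. m z l c) = 1 \<and>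
     (\<forall>i. phi0 m i = phi0 m z)"

definition rr :: "('k::field,'n) tensor \<Rightarrow> ('k,'n) tensor" where
  "rr m = (\<lambda>i j c. if i = z \<and> j \<noteq> l then dlt (nxt j) c
     else if i = z \<and> j = l \<and> c = z then 1 - (\<Sum>c'\<in>UNIV - {z}. m z l c')
     else if i \<noteq> z \<and> j = z \<and> c = z then m z l l - (\<Sum>c'\<in>UNIV - {z}. m i c' c')
     else m i j c)"

lemma phi0_z_K:
  fixes m :: "('k::field,'n) tensor"
  assumes K: "\<And>j c. j \<noteq> l \<Longrightarrow> m z j c = dlt (nxt j) c"
  shows "phi0 m z = m z l l"
proof -
  have "phi0 m z = m z l l + (\<Sum>d\<in>UNIV - {l}. m z d d)" unfolding phi0_def by (rule sum_split) auto
  also have "(\<Sum>d\<in>UNIV - {l}. m z d d) = 0"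
    by (rule sum.neutral) (auto simp: K dlt_def dest: nxt_ne)
  finally show ?thesis by simp
qed

lemma phi0_split: "phi0 m i = m i z z + (\<Sum>c\<in>UNIV - {z}. m i c c)"
  unfolding phi0_def by (rule sum_split) auto

lemma Spred_rr: "Spred (rr (m :: ('k::field,'n) tensor))"
proof -
  let ?m = "rr m"
  have K: "\<And>j c. j \<noteq> l \<Longrightarrow> ?m z j c = dlt (nxt j) c" unfolding rr_def by simp
  have S: "(\<Sum>c\<in>UNIV. ?m z l c) = 1"
  proof -
    have "(\<Sum>c\<in>UNIV. ?m z l c) = ?m z l z + (\<Sum>c\<in>UNIV - {z}. ?m z l c)" by (rule sum_split) auto
    also have "(\<Sum>c\<in>UNIV - {z}. ?m z l c) = (\<Sum>c\<in>UNIV - {z}. m z l c)"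
      by (rule sum.cong) (auto simp: rr_def)
    finally show ?thesis by (simp add: rr_def)
  qed
  have P: "\<And>i. phi0 ?m i = phi0 ?m z"
  proof -
    fix i
    show "phi0 ?m i = phi0 ?m z"
    proof (cases "i = z")
      case False
      hence lz: "l \<noteq> z" by (rule ne_z_l)
      have "phi0 ?m z = ?m z l l" by (rule phi0_z_K[of "rr m", OF K])
      also have "\<dots> = m z l l" using lz unfolding rr_def by simp
      finally have 1: "phi0 ?m z = m z l l" .
      have "phi0 ?m i = ?m i z z + (\<Sum>c\<in>UNIV - {z}. ?m i c c)" by (rule phi0_split)
      also have "(\<Sum>c\<in>UNIV - {z}. ?m i c c) = (\<Sum>c\<in>UNIV - {z}. m i c c)"
        by (rule sum.cong) (auto simp: rr_def False)
      finally have "phi0 ?m i = m z l l" using False by (simp add: rr_def)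
      thus ?thesis using 1 by simp
    qed simp
  qed
  show ?thesis unfolding Spred_def using K S P by blast
qed

lemma Spred_fix: assumes "Spred (m :: ('k::field,'n) tensor)" shows "rr m = m"
proof (intro ext)
  fix i j c
  have K: "\<And>j c. j \<noteq> l \<Longrightarrow> m z j c = dlt (nxt j) c" and S: "(\<Sum>c\<in>UNIV. m z l c) = 1"
    and P: "\<And>i. phi0 m i = phi0 m z" using assms unfolding Spred_def by blast+
  have S': "m z l z = 1 - (\<Sum>c'\<in>UNIV - {z}. m z l c')"
    using S sum_split[of UNIV z "\<lambda>c. m z l c"] by (simp add: eq_diff_eq)
  have P': "m i z z = m z l l - (\<Sum>c'\<in>UNIV - {z}. m i c' c')"
    using P[of i] phi0_z_K[of m, OF K] phi0_split[of m i] by (simp add: eq_diff_eq)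
  show "rr m i j c = m i j c"
  proof (cases "i = z \<and> j \<noteq> l")
    case True thus ?thesis using K by (simp add: rr_def)
  next
    case F1: False
    show ?thesis
    proof (cases "i = z \<and> j = l \<and> c = z")
      case True thus ?thesis using S' by (simp add: rr_def)
    next
      case F2: False
      show ?thesis
      proof (cases "i \<noteq> z \<and> j = z \<and> c = z")
        case True thus ?thesis using P' F1 F2 by (simp add: rr_def)
      next
        case False
        have e1: "(i = z \<and> j \<noteq> l) = False" using F1 by simp
        have e2: "(i = z \<and> j = l \<and> c = z) = False" using F2 by simp
        have e3: "(i \<noteq> z \<and> j = z \<and> c = z) = False" using False by simp
        show ?thesis by (simp only: rr_def e1 e2 e3 if_False)
      qed
    qed
  qed
qed

lemma rr_idem: "rr (rr m) = rr (m :: ('k::field,'n) tensor)"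
  by (rule Spred_fix[OF Spred_rr])

lemma Spred_iff: "Spred m \<longleftrightarrow> rr m = (m :: ('k::field,'n) tensor)"
  using Spred_fix Spred_rr by metis

lemma if_fun: "(\<lambda>m. if P then f m else g m) = (if P then f else g)" by auto

lemma rr_poly: "(\<lambda>m. rr m i j c :: 'k::field) \<in> polyfun"
proof -
  have A: "(\<lambda>m::('k,'n) tensor. 1 - (\<Sum>c'\<in>UNIV - {z}. m z l c')) \<in> polyfun"
    by (intro polyfun_minus polyfun_sum polyfun.const polyfun.coord) simp_all
  have B: "(\<lambda>m::('k,'n) tensor. m z l l - (\<Sum>c'\<in>UNIV - {z}. m i c' c')) \<in> polyfun"
    by (intro polyfun_minus polyfun_sum polyfun.const polyfun.coord) simp_all
  have C: "(\<lambda>m::('k,'n) tensor. dlt (nxt j) c :: 'k) \<in> polyfun" by (rule polyfun.const)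
  have D: "(\<lambda>m::('k,'n) tensor. m i j c) \<in> polyfun" by (rule polyfun.coord)
  show ?thesis
  proof (cases "i = z \<and> j \<noteq> l")
    case True
    hence "(\<lambda>m. rr m i j c :: 'k) = (\<lambda>m. dlt (nxt j) c)" unfolding rr_def by simp
    thus ?thesis using C by simp
  next
    case F1: False
    hence e1: "(i = z \<and> j \<noteq> l) = False" by simp
    show ?thesis
    proof (cases "i = z \<and> j = l \<and> c = z")
      case True
      hence "(\<lambda>m. rr m i j c :: 'k) = (\<lambda>m. 1 - (\<Sum>c'\<in>UNIV - {z}. m z l c'))" unfolding rr_def using F1 by auto
      thus ?thesis using A by simp
    next
      case F2: False
      hence e2: "(i = z \<and> j = l \<and> c = z) = False" by simp
      show ?thesis
      proof (cases "i \<noteq> z \<and> j = z \<and> c = z")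
        case True
        hence "(\<lambda>m. rr m i j c :: 'k) = (\<lambda>m. m z l l - (\<Sum>c'\<in>UNIV - {z}. m i c' c'))"
          unfolding rr_def using F1 F2 by auto
        thus ?thesis using B by simp
      next
        case False
        hence e3: "(i \<noteq> z \<and> j = z \<and> c = z) = False" by simp
        have "(\<lambda>m. rr m i j c :: 'k) = (\<lambda>m. m i j c)" by (simp only: rr_def e1 e2 e3 if_False)
        thus ?thesis using D by simp
      qed
    qed
  qed
qed

definition V :: "('k::field,'n) tensor \<Rightarrow> ('k,'n) mat" where
  "V m = (\<lambda>i j. v m (idx j) i)"

lemma V_act: assumes "g \<in> GL" "dA m \<noteq> 0" shows "V (act g m) = mat_mult g (V m)"
  unfolding V_def v_act[OF assms] mv_def mat_mult_def by simp

lemma V_rat: "(\<And>m. m \<in> U \<Longrightarrow> dA m \<noteq> 0) \<Longrightarrow> ratfun U (\<lambda>m. V m i j)"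
  unfolding V_def by (rule v_rat)

definition dV :: "('k::field,'n) tensor \<Rightarrow> 'k" where "dV m = det (tv (V m))"

lemma dV_rat: "(\<And>m. m \<in> U \<Longrightarrow> dA m \<noteq> 0) \<Longrightarrow> ratfun U dV"
  unfolding dV_def tv_def using ratfun_det[of U "\<lambda>m i j. V m i j"] V_rat by blast

definition gam :: "('k::field,'n) tensor \<Rightarrow> ('k,'n) mat" where
  "gam m = (\<lambda>k j. det (\<chi> a b. if b = k then dlt j a else V m a b) / dV m)"

lemma gam_right: assumes "dV m \<noteq> 0" shows "mat_mult (V m) (gam m) = mat_one"
proof (intro ext)
  fix a jj
  have c: "det (tv (V m)) \<noteq> 0" using assms unfolding dV_def .
  define x where "x = (\<chi> k. gam m k jj)"
  have "x = (\<chi> k. det (\<chi> i j. if j = k then (\<chi> a. dlt jj a) $ i else tv (V m) $ i $ j) / det (tv (V m)))"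
    unfolding x_def gam_def dV_def tv_def by (simp only: vec_lambda_beta)
  hence "tv (V m) *v x = (\<chi> a. dlt jj a)" using cramer[OF c] by blast
  hence 1: "(tv (V m) *v x) $ a = dlt jj a" by (simp only: vec_lambda_beta)
  have 2: "(tv (V m) *v x) $ a = (\<Sum>b\<in>UNIV. V m a b * gam m b jj)"
    unfolding matrix_vector_mult_def x_def tv_def by (simp only: vec_lambda_beta)
  show "mat_mult (V m) (gam m) a jj = mat_one a jj"
    using 1 2 unfolding mat_mult_def mat_one_def dlt_def by simp
qed

lemma gam_GL: assumes "dV m \<noteq> 0" shows "gam m \<in> GL" "mat_inv (gam m) = V m"
proof -
  have 1: "mat_mult (V m) (gam m) = mat_one" by (rule gam_right[OF assms])
  have 2: "mat_mult (gam m) (V m) = mat_one" by (rule left_right_inv[OF 1])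
  show "gam m \<in> GL" unfolding GL_def using 1 2 by blast
  show "mat_inv (gam m) = V m" using inv_unique_right[OF \<open>gam m \<in> GL\<close> 2] by simp
qed

lemma gam_rat: assumes "\<And>m. m \<in> U \<Longrightarrow> dA m \<noteq> 0" "\<And>m. m \<in> U \<Longrightarrow> dV m \<noteq> 0"
  shows "ratfun U (\<lambda>m. gam m k j)"
  unfolding gam_def
proof (rule ratfun_divide)
  show "ratfun U (\<lambda>m. det (\<chi> a b. if b = k then dlt j a else V m a b))"
    apply (rule ratfun_det)
    subgoal for a b by (cases "b = k") (simp_all add: ratfun_const V_rat assms)
    done
  show "ratfun U dV" by (rule dV_rat[OF assms(1)])
qed (use assms in auto)

lemma Spred_V: assumes "nd (m :: ('k::field,'n) tensor)" "Spred m" shows "V m = mat_one"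
proof -
  have K: "\<And>j c. j \<noteq> l \<Longrightarrow> m z j c = dlt (nxt j) c" and S: "(\<Sum>c\<in>UNIV. m z l c) = 1"
    and P: "\<And>i. phi0 m i = phi0 m z" using assms unfolding Spred_def by blast+
  have d: "dA m \<noteq> 0" using assms(1) dA_nd by blast
  define t where "t = phi0 m z"
  have Pt: "\<And>c. phi0 m c = t" unfolding t_def by (rule P)
  have rows: "\<And>j. (\<Sum>c\<in>UNIV. m z j c) = 1"
  proof -
    fix j show "(\<Sum>c\<in>UNIV. m z j c) = 1"
      by (cases "j = l") (simp_all add: S K dlt_def)
  qed
  have "\<forall>j. (\<Sum>i\<in>UNIV. dlt z i * alpha m i j) = phi0 m j"
  proof
    fix j
    have "(\<Sum>i\<in>UNIV. dlt z i * alpha m i j) = alpha m z j" by simp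
    also have "\<dots> = (\<Sum>c\<in>UNIV. m z j c) * t"
      unfolding alpha_def sum_distrib_right by (simp add: Pt)
    also have "\<dots> = phi0 m j" using rows by (simp add: Pt)
    finally show "(\<Sum>i\<in>UNIV. dlt z i * alpha m i j) = phi0 m j" .
  qed
  hence u0: "dlt z = u m" by (rule u_unique[OF d])
  hence u: "u m = dlt z" by (rule sym)
  have vk: "\<And>k. k < CARD('n) \<Longrightarrow> v m k = dlt (e k)"
  proof -
    fix k show "k < CARD('n) \<Longrightarrow> v m k = dlt (e k)"
    proof (induction k)
      case 0 then show ?case using u by (simp add: z_def)
    next
      case (Suc k)
      hence "v m k = dlt (e k)" by simp
      hence "v m (Suc k) = (\<lambda>c. m z (e k) c)" using u by (simp add: mulv_dlt)
      also have "\<dots> = dlt (e (Suc k))" using K[OF ek_ne_l[OF Suc.prems]] nxt_e[OF Suc.prems]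
        by (simp add: fun_eq_iff)
      finally show ?case .
    qed
  qed
  show "V m = mat_one"
  proof (intro ext)
    fix i j
    have "V m i j = v m (idx j) i" by (simp add: V_def)
    also have "\<dots> = dlt j i" using vk[OF idx_lt[of j]] by simp
    also have "\<dots> = mat_one i j" by (simp add: dlt_def mat_one_def)
    finally show "V m i j = mat_one i j" .
  qed
qed

lemma V_Spred: assumes "nd (m :: ('k::field,'n) tensor)" "V m = mat_one" shows "Spred m"
proof -
  have d: "dA m \<noteq> 0" using assms(1) dA_nd by blast
  have vk: "\<And>k. k < CARD('n) \<Longrightarrow> v m k = dlt (e k)"
  proof -
    fix k assume "k < CARD('n)"
    have "\<And>i. v m k i = V m i (e k)" unfolding V_def using \<open>k < CARD('n)\<close> by simp
    hence "\<And>i. v m k i = mat_one i (e k)" unfolding assms(2) .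
    thus "v m k = dlt (e k)" unfolding mat_one_def dlt_def by (intro ext) simp
  qed
  have u: "u m = dlt z" using vk[of 0] by (simp add: z_def)
  have al: "\<And>j. alpha m z j = phi0 m j" using u_eq[OF d] u by simp
  have K: "\<And>j c. j \<noteq> l \<Longrightarrow> m z j c = dlt (nxt j) c"
  proof -
    fix j c assume "j \<noteq> l"
    have "dlt (nxt j) = v m (Suc (idx j))" unfolding nxt_def using vk[OF ne_l[OF \<open>j \<noteq> l\<close>]] by simp
    also have "\<dots> = (\<lambda>c. m z j c)" using vk[OF idx_lt] u by (simp add: mulv_dlt)
    finally show "m z j c = dlt (nxt j) c" by (simp add: fun_eq_iff)
  qed
  have step: "\<And>j. j \<noteq> l \<Longrightarrow> phi0 m j = phi0 m (nxt j)"
  proof -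
    fix j assume "j \<noteq> l"
    have "phi0 m j = alpha m z j" by (simp add: al)
    also have "\<dots> = phi0 m (nxt j)" unfolding alpha_def using K[OF \<open>j \<noteq> l\<close>] by (simp add: dlt_def)
    finally show "phi0 m j = phi0 m (nxt j)" .
  qed
  have pk: "\<And>k. k < CARD('n) \<Longrightarrow> phi0 m (e k) = phi0 m z"
  proof -
    fix k show "k < CARD('n) \<Longrightarrow> phi0 m (e k) = phi0 m z"
    proof (induction k)
      case 0 then show ?case by (simp add: z_def)
    next
      case (Suc k)
      have "phi0 m (e (Suc k)) = phi0 m (e k)"
        using step[OF ek_ne_l[OF Suc.prems]] nxt_e[OF Suc.prems] by simp
      thus ?case using Suc by simp
    qed
  qed
  have P: "\<And>i. phi0 m i = phi0 m z"
  proof -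
    fix i have "phi0 m (e (idx i)) = phi0 m z" by (rule pk[OF idx_lt])
    thus "phi0 m i = phi0 m z" by simp
  qed
  define t where "t = phi0 m z"
  have Pt: "\<And>c. phi0 m c = t" unfolding t_def by (rule P)
  have S: "(\<Sum>c\<in>UNIV. m z l c) = 1"
  proof (cases "t = 0")
    case True
    hence "\<And>i j. alpha m i j = 0" unfolding alpha_def by (simp add: Pt)
    hence "\<forall>j. (\<Sum>i\<in>UNIV. dlt z i * alpha m i j) = 0" by simp
    hence "dlt z = (\<lambda>_. 0::'k)" using assms(1) unfolding nd_def by blast
    hence "dlt z z = (0::'k)" by (rule fun_cong)
    hence False unfolding dlt_def by simp
    thus ?thesis ..
  next
    case False
    have "t = alpha m z l" using al[of l] by (simp add: Pt)
    also have "\<dots> = (\<Sum>c\<in>UNIV. m z l c) * t"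
      unfolding alpha_def sum_distrib_right by (simp add: Pt)
    finally show ?thesis using False by simp
  qed
  show ?thesis unfolding Spred_def using K S P by blast
qed

definition m0 :: "('k::field,'n) tensor" where
  "m0 = (\<lambda>i j c. if i = z then (if j \<noteq> l then dlt (nxt j) c else dlt l c)
                 else (if i = j \<and> j = c then 1 else 0))"

lemma phi0_m0: "phi0 (m0 :: ('k::field,'n) tensor) i = 1"
proof (cases "i = z")
  case True
  have "phi0 (m0 :: ('k,'n) tensor) z = m0 z l l + (\<Sum>d\<in>UNIV - {l}. m0 z d d)"
    unfolding phi0_def by (rule sum_split) auto
  also have "(\<Sum>d\<in>UNIV - {l}. (m0 :: ('k,'n) tensor) z d d) = 0"
    by (rule sum.neutral) (auto simp: m0_def dlt_def dest: nxt_ne)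
  finally show ?thesis using True by (simp add: m0_def dlt_def)
next
  case False
  thus ?thesis unfolding phi0_def m0_def by simp
qed

lemma Spred_m0: "Spred (m0 :: ('k::field,'n) tensor)"
proof -
  have K: "\<forall>j. j \<noteq> l \<longrightarrow> (\<forall>c. (m0 :: ('k,'n) tensor) z j c = dlt (nxt j) c)" by (simp add: m0_def)
  have S: "(\<Sum>c\<in>UNIV. (m0 :: ('k,'n) tensor) z l c) = 1" by (simp add: m0_def dlt_def)
  have P: "\<forall>i. phi0 (m0 :: ('k,'n) tensor) i = phi0 m0 z" by (simp add: phi0_m0)
  show ?thesis unfolding Spred_def using K S P by blast
qed

lemma nd_m0: "nd (m0 :: ('k::field,'n) tensor)"
  unfolding nd_def
proof (intro allI impI)
  fix x :: "'n \<Rightarrow> 'k" assume a: "\<forall>j. (\<Sum>i\<in>UNIV. x i * alpha m0 i j) = 0"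
  have al: "\<And>i j. alpha m0 i j = (if i = z then 1 else if i = j then 1 else (0::'k))"
  proof -
    fix i j
    have "alpha m0 i j = (\<Sum>c\<in>UNIV. (m0 :: ('k,'n) tensor) i j c)" unfolding alpha_def phi0_m0 by simp
    thus "alpha m0 i j = (if i = z then 1 else if i = j then 1 else (0::'k))"
      by (cases "j = l") (auto simp: m0_def dlt_def)
  qed
  have ex: "\<And>j. (\<Sum>i\<in>UNIV. x i * alpha m0 i j) = x z + (if j \<noteq> z then x j else 0)"
  proof -
    fix j
    have "(\<Sum>i\<in>UNIV. x i * alpha m0 i j) = x z * alpha m0 z j + (\<Sum>i\<in>UNIV - {z}. x i * alpha m0 i j)"
      by (rule sum_split) auto
    also have "(\<Sum>i\<in>UNIV - {z}. x i * alpha m0 i j) = (\<Sum>i\<in>UNIV - {z}. if i = j then x i else 0)"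
      by (rule sum.cong) (auto simp: al)
    also have "\<dots> = (if j \<noteq> z then x j else 0)" by (simp add: sum.delta')
    finally show "(\<Sum>i\<in>UNIV. x i * alpha m0 i j) = x z + (if j \<noteq> z then x j else 0)"
      by (simp add: al)
  qed
  have xz: "x z = 0" using a ex[of z] by simp
  show "x = (\<lambda>_. 0)"
  proof
    fix j show "x j = 0" using a ex[of j] xz by (cases "j = z") auto
  qed
qed

end



context enum begin

lemma final:
  assumes inf: "infinite (UNIV :: 'k::field set)"
  shows "\<exists>(Sp :: (('k,'n) tensor \<Rightarrow> 'k) set) (Tq :: (('k,'n) tensor \<Rightarrow> 'k) set).
           finite Sp \<and> finite Tq \<and> Sp \<subseteq> polyfun \<and> Tq \<subseteq> polyfun \<and>
           (\<forall>s\<in>Sp. nonconstant s) \<and> (\<forall>t\<in>Tq. nonconstant t) \<and>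
           (let S = {m. \<forall>s\<in>Sp. s m = 0}; U = {m. \<forall>t\<in>Tq. t m \<noteq> 0} in
              irreducible_set S \<and> restriction_iso S \<and>
              zariski_open U \<and> zariski_dense U \<and>
              (\<forall>a\<in>U. \<exists>!g. g \<in> GL \<and> act g a \<in> S))"
proof -
  have "ratfun {m :: ('k,'n) tensor. dA m \<noteq> 0} dV" by (rule dV_rat) simp
  then obtain P Q :: "('k,'n) tensor \<Rightarrow> 'k" where PQ: "P \<in> polyfun" "Q \<in> polyfun"
    "\<And>m. dA m \<noteq> 0 \<Longrightarrow> Q m \<noteq> 0 \<and> dV m = P m / Q m"
    unfolding ratfun_def by auto
  define D where "D = (\<lambda>m :: ('k,'n) tensor. dA m * P m)"
  have DdA: "\<And>m. D m \<noteq> 0 \<Longrightarrow> dA m \<noteq> 0" unfolding D_def by simp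
  have DdV: "\<And>m. D m \<noteq> 0 \<Longrightarrow> dV m \<noteq> 0"
  proof -
    fix m assume "D m \<noteq> 0"
    hence "dA m \<noteq> 0" "P m \<noteq> 0" unfolding D_def by auto
    thus "dV m \<noteq> 0" using PQ(3)[of m] by simp
  qed
  have m0dA: "dA (m0 :: ('k,'n) tensor) \<noteq> 0" using nd_m0 dA_nd by blast
  have Vm0: "V (m0 :: ('k,'n) tensor) = mat_one" by (rule Spred_V[OF nd_m0 Spred_m0])
  have "dV (m0 :: ('k,'n) tensor) = 1" unfolding dV_def Vm0 tv_one by simp
  hence "P m0 \<noteq> 0" using PQ(3)[OF m0dA] by auto
  hence Dm0: "D m0 \<noteq> 0" unfolding D_def using m0dA by simp
  interpret slice rr D gam m0
  proof
    show "infinite (UNIV :: 'k set)" by (rule inf)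
    show "\<And>i j c. (\<lambda>m. rr m i j c) \<in> polyfun" by (rule rr_poly)
    show "\<And>m. rr (rr m) = rr m" by (rule rr_idem)
    show "D \<in> polyfun" unfolding D_def by (intro polyfun.mult dA_poly[unfolded] PQ(1))
    show "rr m0 = m0" by (rule Spred_fix[OF Spred_m0])
    show "D m0 \<noteq> 0" by (rule Dm0)
    show "\<And>m. D m \<noteq> 0 \<Longrightarrow> gam m \<in> GL" using gam_GL(1) DdV by blast
    show "\<And>m. D m \<noteq> 0 \<Longrightarrow> rr (act (gam m) m) = act (gam m) m"
    proof -
      fix m :: "('k,'n) tensor" assume Dm: "D m \<noteq> 0"
      have gG: "gam m \<in> GL" using gam_GL(1) DdV Dm by blast
      have d1: "dA m \<noteq> 0" by (rule DdA[OF Dm])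
      have "nd (act (gam m) m)" using u_act(1)[OF gG d1] dA_nd by blast
      moreover have "V (act (gam m) m) = mat_one"
        using V_act[OF gG d1] left_right_inv[OF gam_right[OF DdV[OF Dm]]] by simp
      ultimately have "Spred (act (gam m) m)" by (rule V_Spred)
      thus "rr (act (gam m) m) = act (gam m) m" by (rule Spred_fix)
    qed
    show "\<And>m g. D m \<noteq> 0 \<Longrightarrow> g \<in> GL \<Longrightarrow> rr (act g m) = act g m \<Longrightarrow> g = gam m"
    proof -
      fix m :: "('k,'n) tensor" and g assume Dm: "D m \<noteq> 0" and gG: "g \<in> GL" and fx: "rr (act g m) = act g m"
      have d1: "dA m \<noteq> 0" by (rule DdA[OF Dm])
      have "nd (act g m)" using u_act(1)[OF gG d1] dA_nd by blast
      moreover have "Spred (act g m)" using fx Spred_iff by blast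
      ultimately have "V (act g m) = mat_one" by (rule Spred_V)
      hence gV: "mat_mult g (V m) = mat_one" using V_act[OF gG d1] by simp
      have "g = mat_mult g (mat_mult (V m) (gam m))" using gam_right[OF DdV[OF Dm]] by simp
      also have "\<dots> = mat_mult (mat_mult g (V m)) (gam m)" by (simp only: mat_mult_assoc)
      also have "\<dots> = gam m" using gV by simp
      finally show "g = gam m" .
    qed
    show "\<And>i j. ratfun {m. D m \<noteq> 0} (\<lambda>m. gam m i j)"
      by (rule gam_rat) (auto dest: DdA DdV)
    show "\<And>i j. ratfun {m. D m \<noteq> 0} (\<lambda>m. mat_inv (gam m) i j)"
    proof -
      fix i j
      have "ratfun {m. D m \<noteq> 0} (\<lambda>m. V m i j)" by (rule V_rat) (auto dest: DdA)
      thus "ratfun {m. D m \<noteq> 0} (\<lambda>m. mat_inv (gam m) i j)"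
        by (rule ratfun_cong) (simp add: gam_GL(2) DdV)
    qed
  qed
  show ?thesis by (rule main)
qed

end

theorem theorem2:
  fixes k_ty :: "'k::field itself" and n_ty :: "'n::finite itself"
  assumes "alg_closed TYPE('k)"
    and "(2::'k) \<noteq> 0"
  shows "\<exists>(Sp :: (('k,'n) tensor \<Rightarrow> 'k) set) (Tq :: (('k,'n) tensor \<Rightarrow> 'k) set).
           finite Sp \<and> finite Tq \<and> Sp \<subseteq> polyfun \<and> Tq \<subseteq> polyfun \<and>
           (\<forall>s\<in>Sp. nonconstant s) \<and> (\<forall>t\<in>Tq. nonconstant t) \<and>
           (let S = {m. \<forall>s\<in>Sp. s m = 0}; U = {m. \<forall>t\<in>Tq. t m \<noteq> 0} in
              irreducible_set S \<and> restriction_iso S \<and>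
              zariski_open U \<and> zariski_dense U \<and>
              (\<forall>a\<in>U. \<exists>!g. g \<in> GL \<and> act g a \<in> S))"
proof -
  have inf: "infinite (UNIV :: 'k set)" by (rule alg_closed_infinite[OF assms(1)])
  obtain e :: "nat \<Rightarrow> 'n" where "bij_betw e {0..<card (UNIV :: 'n set)} UNIV"
    using ex_bij_betw_nat_finite[of "UNIV :: 'n set"] by auto
  hence "bij_betw e {..<CARD('n)} UNIV" by (simp add: atLeast0LessThan)
  then interpret enum e by unfold_locales
  show ?thesis by (rule final[OF inf])
qed


end
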